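(* For every $d\in2\mathbb N$, every $\tau\in S_d$ and every $n\in\mathbb N$ with $n>d(p-1)+d(4p-4)+\frac{d^2}{2}(4p-4)+\frac d2$, $$\binom{n-d(p-1)-d(4p-4)-\frac{d^2}{2}(4p-4)}{d/2}\le N(d,n,\tau).$$
   Context: Fix an integer $p\ge2$; $F_p=\langle x_0,x_1,\dots\mid x_nx_k=x_kx_{n+p-1}\ \forall k<n\rangle$ with identity $e$. For $d\in\mathbb N$ and $[d]=\{1,\dots,d\}$, a word of length $d$ is a tuple $w=(x_{i(1)}^{\epsilon(1)},\dots,x_{i(d)}^{\epsilon(d)})$ with $i:[d]\to\mathbb N_0$, $\epsilon:[d]\to\{1,-1\}$, written $w=(i,\epsilon)$; $\mathrm{eval}(w)=x_{i(1)}^{\epsilon(1)}\cdots x_{i(d)}^{\epsilon(d)}$; $\mathcal W_0(d,n)$ is the set of words of length $d$ with $\mathrm{eval}(w)=e$ and $i$ taking values in $\{0,\dots,n-1\}$. Rewriting relations: ($\rightsquigarrow$) a consecutive pair $(x_a^{-1},x_b)$ is replaced by $(x_b,x_{a+p-1}^{-1})$ if $a>b$, by $(x_{b+p-1},x_a^{-1})$ if $a<b$, by $(x_b,x_a^{-1})$ if $a=b$; ($\rightarrowtail$, on $\rightsquigarrow$-irreducible words) $(x_a,x_b)$ with $b-p+1>a$ is replaced by $(x_{b-p+1},x_a)$, and $(x_a^{-1},x_b^{-1})$ with $a-p+1>b$ by $(x_b^{-1},x_{a-p+1}^{-1})$. The normal form $\mathrm{NF}(w)$ is obtained by applying $\rightsquigarrow$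 until irreducible and then $\rightarrowtail$ until irreducible (well defined). Each step swaps two adjacent letters; $\tau(w)\in S_d$ is defined by letting $\tau(w)(l)$ be the position in $\mathrm{NF}(w)$ of the letter originating from the $l$-th letter of $w$. For $\tau\in S_d$: $\mathcal W_0(d,n,\tau)=\{w\in\mathcal W_0(d,n):\tau(w)=\tau\}$ and $N(d,n,\tau)=|\mathcal W_0(d,n,\tau)|$. *)

theory Defs
  imports "HOL-Combinatorics.Permutations"
begin

text \<open>A letter x_i^eps is encoded as (i, b) with b = True for eps = 1 and b = False for eps = -1.\<close>
type_synonym letter = "nat \<times> bool"

text \<open>Equality in F_p = < x_0, x_1, ... | x_n x_k = x_k x_(n+p-1), k < n >:
  the congruence on words generated by free cancellation and the defining relations.
  eval u = eval v in F_p iff Fp_eq p u v.\<close>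
inductive Fp_eq :: "nat \<Rightarrow> letter list \<Rightarrow> letter list \<Rightarrow> bool" for p where
  refl: "Fp_eq p w w"
| sym: "Fp_eq p u v \<Longrightarrow> Fp_eq p v u"
| trans: "Fp_eq p u v \<Longrightarrow> Fp_eq p v w \<Longrightarrow> Fp_eq p u w"
| cancel: "Fp_eq p (u @ [(a, s), (a, \<not> s)] @ v) (u @ v)"
| rel: "k < m \<Longrightarrow>
    Fp_eq p (u @ [(m, True), (k, True)] @ v) (u @ [(k, True), (m + p - 1, True)] @ v)"

definition eval_trivial :: "nat \<Rightarrow> letter list \<Rightarrow> bool" where
  "eval_trivial p w \<longleftrightarrow> Fp_eq p w []"

definition W0 :: "nat \<Rightarrow> nat \<Rightarrow> nat \<Rightarrow> letter list set" where
  "W0 p d n = {w. length w = d \<and> (\<forall>x\<in>set w. fst x < n) \<and> eval_trivial p w}"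

text \<open>Labelled words: each letter carries the (1-based) position it originates from.\<close>
type_synonym lword = "(letter \<times> nat) list"

inductive sq_step :: "nat \<Rightarrow> lword \<Rightarrow> lword \<Rightarrow> bool" for p where
  gt: "a > b \<Longrightarrow> sq_step p (u @ [((a, False), l), ((b, True), m)] @ v)
                              (u @ [((b, True), m), ((a + p - 1, False), l)] @ v)"
| lt: "a < b \<Longrightarrow> sq_step p (u @ [((a, False), l), ((b, True), m)] @ v)
                              (u @ [((b + p - 1, True), m), ((a, False), l)] @ v)"
| eq: "a = b \<Longrightarrow> sq_step p (u @ [((a, False), l), ((b, True), m)] @ v)
                              (u @ [((b, True), m), ((a, False), l)] @ v)"

text \<open>The rewriting relation >-> (tail arrow); the condition b - p + 1 > a is written
  a + p - 1 < b (equivalent over the integers), similarly for the inverse case.\<close>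
inductive tl_step :: "nat \<Rightarrow> lword \<Rightarrow> lword \<Rightarrow> bool" for p where
  pos: "a + p - 1 < b \<Longrightarrow> tl_step p (u @ [((a, True), l), ((b, True), m)] @ v)
                              (u @ [((b + 1 - p, True), m), ((a, True), l)] @ v)"
| neg: "b + p - 1 < a \<Longrightarrow> tl_step p (u @ [((a, False), l), ((b, False), m)] @ v)
                              (u @ [((b, False), m), ((a + 1 - p, False), l)] @ v)"

definition NF_rel :: "nat \<Rightarrow> lword \<Rightarrow> lword \<Rightarrow> bool" where
  "NF_rel p w u \<longleftrightarrow> (\<exists>v. (sq_step p)\<^sup>*\<^sup>* w v \<and> \<not> (\<exists>v'. sq_step p v v') \<and>
                          (tl_step p)\<^sup>*\<^sup>* v u \<and> \<not> (\<exists>u'. tl_step p u u'))"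

definition label :: "letter list \<Rightarrow> lword" where
  "label w = zip w [1..<Suc (length w)]"

text \<open>position (1-based) in u of the letter with label l (identity outside the labels)\<close>
definition pos_fun :: "lword \<Rightarrow> nat \<Rightarrow> nat" where
  "pos_fun u l = (if \<exists>j<length u. snd (u ! j) = l
                  then Suc (THE j. j < length u \<and> snd (u ! j) = l) else l)"

definition tau :: "nat \<Rightarrow> letter list \<Rightarrow> nat \<Rightarrow> nat" where
  "tau p w = (THE t. \<exists>u. NF_rel p (label w) u \<and> t = pos_fun u)"

definition W0_tau :: "nat \<Rightarrow> nat \<Rightarrow> nat \<Rightarrow> (nat \<Rightarrow> nat) \<Rightarrow> letter list set" where
  "W0_tau p d n t = {w \<in> W0 p d n. tau p w = t}"

definition N :: "nat \<Rightarrow> nat \<Rightarrow> nat \<Rightarrow> (nat \<Rightarrow> nat) \<Rightarrow> nat" where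
  "N p d n t = card (W0_tau p d n t)"

end

theory Submission
  imports Defs
begin


fun bef :: "nat list \<Rightarrow> nat \<Rightarrow> nat \<Rightarrow> bool" where
  "bef [] a b = False"
| "bef (z # zs) a b = ((z = a \<and> b \<in> set zs) \<or> bef zs a b)"

lemma bef_append: "bef (xs @ ys) a b \<longleftrightarrow> bef xs a b \<or> bef ys a b \<or> (a \<in> set xs \<and> b \<in> set ys)"
  by (induction xs) auto

lemma bef_in: "bef xs a b \<Longrightarrow> a \<in> set xs \<and> b \<in> set xs"
  by (induction xs) auto

lemma bef_asym: "distinct xs \<Longrightarrow> bef xs a b \<Longrightarrow> \<not> bef xs b a"
  by (induction xs) (auto dest: bef_in)

lemma bef_total: "a \<in> set xs \<Longrightarrow> b \<in> set xs \<Longrightarrow> a \<noteq> b \<Longrightarrow> bef xs a b \<or> bef xs b a"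
  by (induction xs) auto

lemma bef_upt: "bef [i..<j] a b \<longleftrightarrow> i \<le> a \<and> a < b \<and> b < j"
  by (induction j) (auto simp: bef_append)

lemma bef_swap:
  assumes "distinct (u @ [a, b] @ v)"
  shows "bef (u @ [b, a] @ v) x y \<longleftrightarrow> (x = b \<and> y = a) \<or> (bef (u @ [a, b] @ v) x y \<and> \<not> (x = a \<and> y = b))"
  using assms by (auto simp: bef_append dest: bef_in)

lemma bef_eq_list:
  "distinct xs \<Longrightarrow> distinct ys \<Longrightarrow> set xs = set ys \<Longrightarrow> (\<forall>a b. bef xs a b \<longleftrightarrow> bef ys a b) \<Longrightarrow> xs = ys"
proof (induction xs arbitrary: ys)
  case Nil thus ?case by simp
next
  case (Cons x xs)
  then obtain y ys' where ys: "ys = y # ys'" by (cases ys) auto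
  have "x = y"
  proof (rule ccontr)
    assume "x \<noteq> y"
    hence "x \<in> set ys'" using Cons.prems ys by auto
    hence "bef ys y x" using ys by simp
    hence "bef (x # xs) y x" using Cons.prems by blast
    moreover have "bef (x#xs) x y" using Cons.prems ys \<open>x \<noteq> y\<close> by auto
    ultimately show False using bef_asym Cons.prems(1) by blast
  qed
  moreover have "xs = ys'"
  proof (rule Cons.IH)
    show "distinct xs" "distinct ys'" using Cons.prems ys by auto
    show "set xs = set ys'" using Cons.prems ys \<open>x = y\<close> by auto
    show "\<forall>a b. bef xs a b \<longleftrightarrow> bef ys' a b"
    proof (intro allI)
      fix a b
      have "bef xs a b \<longleftrightarrow> bef (x#xs) a b \<and> a \<noteq> x"
        using Cons.prems(1) by (auto dest: bef_in)
      moreover have "bef ys' a b \<longleftrightarrow> bef (y#ys') a b \<and> a \<noteq> y"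
        using Cons.prems(2) ys by (auto dest: bef_in)
      ultimately show "bef xs a b \<longleftrightarrow> bef ys' a b" using Cons.prems(4) ys \<open>x = y\<close> by auto
    qed
  qed
  ultimately show ?case using ys by simp
qed

lemma bef_split: "bef (map g xs) b a \<Longrightarrow> \<exists>pre q post. xs = pre @ q # post \<and> g q = b \<and> a \<in> g ` set post"
proof (induction xs)
  case Nil thus ?case by simp
next
  case (Cons x xs)
  show ?case
  proof (cases "g x = b \<and> a \<in> set (map g xs)")
    case True thus ?thesis by (intro exI[of _ "[]"]) auto
  next
    case False
    then obtain pre q post where "xs = pre @ q # post \<and> g q = b \<and> a \<in> g ` set post"
      using Cons by auto
    thus ?thesis by (intro exI[of _ "x # pre"]) auto
  qed
qed

lemma ascent: "\<not> f x \<Longrightarrow> y \<in> set xs \<Longrightarrow> f y \<Longrightarrow> \<exists>u a b v. x # xs = u @ [a, b] @ v \<and> \<not> f a \<and> f b"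
proof (induction xs arbitrary: x)
  case Nil thus ?case by simp
next
  case (Cons z zs)
  show ?case
  proof (cases "f z")
    case True thus ?thesis using Cons.prems by (intro exI[of _ "[]"]) auto
  next
    case False
    hence "y \<in> set zs" using Cons.prems by auto
    from Cons.IH[OF False this Cons.prems(3)] obtain u a b v where
      "z # zs = u @ [a, b] @ v \<and> \<not> f a \<and> f b" by blast
    thus ?thesis by (intro exI[of _ "x # u"]) auto
  qed
qed

lemma bef_ascent:
  assumes "bef (map g xs) b a" "\<forall>q\<in>set xs. g q = b \<longrightarrow> \<not> f q" "\<forall>q\<in>set xs. g q = a \<longrightarrow> f q"
  shows "\<exists>u x y v. xs = u @ [x, y] @ v \<and> \<not> f x \<and> f y"
proof -
  obtain pre q post where 1: "xs = pre @ q # post" "g q = b" "a \<in> g ` set post"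
    using bef_split[OF assms(1)] by blast
  then obtain y where y: "y \<in> set post" "g y = a" by auto
  have "\<not> f q" "f y" using assms 1 y by auto
  from ascent[OF \<open>\<not> f q\<close> y(1) \<open>f y\<close>] obtain u a' b' v where
    "q # post = u @ [a', b'] @ v \<and> \<not> f a' \<and> f b'" by blast
  thus ?thesis using 1 by (intro exI[of _ "pre @ u"]) auto
qed

lemma filter_split:
  assumes "\<forall>i j. i < j \<longrightarrow> j < length xs \<longrightarrow> f (xs ! j) \<longrightarrow> f (xs ! i)"
  shows "xs = filter f xs @ filter (\<lambda>x. \<not> f x) xs"
  using assms
proof (induction xs)
  case Nil thus ?case by simp
next
  case (Cons x xs)
  have IH: "xs = filter f xs @ filter (\<lambda>x. \<not> f x) xs"
    apply (rule Cons.IH) using Cons.prems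
    by (metis Suc_less_eq length_Cons nth_Cons_Suc)
  show ?case
  proof (cases "f x")
    case True thus ?thesis using IH by simp
  next
    case False
    have "\<forall>y\<in>set xs. \<not> f y"
    proof
      fix y assume "y \<in> set xs"
      then obtain j where "j < length xs" "xs ! j = y" by (auto simp: in_set_conv_nth)
      thus "\<not> f y" using Cons.prems[rule_format, of 0 "Suc j"] False by auto
    qed
    thus ?thesis using False by (simp add: filter_empty_conv)
  qed
qed

lemma nf_exists:
  assumes "\<And>x y. R x y \<Longrightarrow> (m :: 'a \<Rightarrow> nat) y < m x"
  shows "\<exists>y. R\<^sup>*\<^sup>* x y \<and> \<not> (\<exists>z. R y z)"
proof (induction "m x" arbitrary: x rule: less_induct)
  case less
  show ?case
  proof (cases "\<exists>z. R x z")
    case True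
    then obtain z where "R x z" by blast
    with less[of z] assms obtain y where "R\<^sup>*\<^sup>* z y \<and> \<not> (\<exists>z. R y z)" by blast
    thus ?thesis using \<open>R x z\<close> by (meson converse_rtranclp_into_rtranclp)
  qed auto
qed

fun negmeas :: "lword \<Rightarrow> nat" where
  "negmeas [] = 0"
| "negmeas (q # qs) = (if snd (fst q) then 0 else length qs) + negmeas qs"

lemma negmeas_append: "negmeas (xs @ ys) = negmeas xs + negmeas ys + length (filter (\<lambda>q. \<not> snd (fst q)) xs) * length ys"
  by (induction xs) auto

lemma sq_dec: "sq_step p s s' \<Longrightarrow> negmeas s' < negmeas s"
  by (induction rule: sq_step.induct) (auto simp: negmeas_append)

lemma tl_dec: "tl_step p s s' \<Longrightarrow> p \<ge> 2 \<Longrightarrow> sum_list (map (fst o fst) s') < sum_list (map (fst o fst) s)"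
  by (induction rule: tl_step.induct) auto

lemma Fp_ctx: "Fp_eq p u v \<Longrightarrow> Fp_eq p (x @ u @ y) (x @ v @ y)"
proof (induction rule: Fp_eq.induct)
  case (refl w) thus ?case by (rule Fp_eq.refl)
next
  case (sym u v) thus ?case using Fp_eq.sym by blast
next
  case (trans u v w) thus ?case by (metis Fp_eq.trans)
next
  case (cancel u a s v)
  from Fp_eq.cancel[of p "x @ u" a s "v @ y"] show ?case by simp
next
  case (rel k m u v)
  from Fp_eq.rel[OF rel, of p "x @ u" "v @ y"] show ?case by simp
qed

lemma canc: "Fp_eq p (u @ [(a, s), (a, \<not> s)] @ v) (u @ v)" by (rule Fp_eq.cancel)
lemma canc': "Fp_eq p (u @ v) (u @ [(a, s), (a, \<not> s)] @ v)" by (rule Fp_eq.sym, rule Fp_eq.cancel)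

lemma Fp_pair: "Fp_eq p u v \<Longrightarrow> Fp_eq p (x @ u @ y) (x @ v @ y)" by (rule Fp_ctx)

lemma sound_sq_gt: "b < a \<Longrightarrow> Fp_eq p [(a, False), (b, True)] [(b, True), (a + p - 1, False)]"
proof -
  assume ab: "b < a"
  have 1: "Fp_eq p [(a, False), (b, True)] [(a, False), (b, True), (a + p - 1, True), (a + p - 1, False)]"
    using canc'[of p "[(a, False), (b, True)]" "[]" "a + p - 1" True] by simp
  have 2: "Fp_eq p [(a, False), (a, True), (b, True), (a + p - 1, False)] [(a, False), (b, True), (a + p - 1, True), (a + p - 1, False)]"
    using Fp_eq.rel[OF ab, of p "[(a, False)]" "[(a + p - 1, False)]"] by simp
  have 3: "Fp_eq p [(a, False), (a, True), (b, True), (a + p - 1, False)] [(b, True), (a + p - 1, False)]"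
    using canc[of p "[]" a False "[(b, True), (a + p - 1, False)]"] by simp
  show ?thesis using 1 2 3 by (meson Fp_eq.sym Fp_eq.trans)
qed

lemma sound_sq_lt: "a < b \<Longrightarrow> Fp_eq p [(a, False), (b, True)] [(b + p - 1, True), (a, False)]"
proof -
  assume ab: "a < b"
  have 1: "Fp_eq p [(b + p - 1, True), (a, False)] [(a, False), (a, True), (b + p - 1, True), (a, False)]"
    using canc'[of p "[]" "[(b + p - 1, True), (a, False)]" a False] by simp
  have 2: "Fp_eq p [(a, False), (b, True), (a, True), (a, False)] [(a, False), (a, True), (b + p - 1, True), (a, False)]"
    using Fp_eq.rel[OF ab, of p "[(a, False)]" "[(a, False)]"] by simp
  have 3: "Fp_eq p [(a, False), (b, True), (a, True), (a, False)] [(a, False), (b, True)]"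
    using canc[of p "[(a, False), (b, True)]" a True "[]"] by simp
  show ?thesis using 1 2 3 by (meson Fp_eq.sym Fp_eq.trans)
qed

lemma sound_sq_eq: "Fp_eq p [(a, False), (a, True)] [(a, True), (a, False)]"
proof -
  have 1: "Fp_eq p [(a, False), (a, True)] []" using canc[of p "[]" a False "[]"] by simp
  have 2: "Fp_eq p [(a, True), (a, False)] []" using canc[of p "[]" a True "[]"] by simp
  show ?thesis using 1 2 by (meson Fp_eq.sym Fp_eq.trans)
qed

lemma sound_tl_pos: "p \<ge> 2 \<Longrightarrow> a + p - 1 < b \<Longrightarrow> Fp_eq p [(a, True), (b, True)] [(b + 1 - p, True), (a, True)]"
proof -
  assume p: "p \<ge> 2" and ab: "a + p - 1 < b"
  have "a < b + 1 - p" using p ab by auto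
  from Fp_eq.rel[OF this, of p "[]" "[]"] have "Fp_eq p [(b + 1 - p, True), (a, True)] [(a, True), (b + 1 - p + p - 1, True)]" by simp
  moreover have "b + 1 - p + p - 1 = b" using p ab by auto
  ultimately show ?thesis by (metis Fp_eq.sym)
qed

lemma sound_tl_neg: "p \<ge> 2 \<Longrightarrow> b + p - 1 < a \<Longrightarrow> Fp_eq p [(a, False), (b, False)] [(b, False), (a + 1 - p, False)]"
proof -
  assume p: "p \<ge> 2" and ab: "b + p - 1 < a"
  define m where "m = a + 1 - p"
  have bm: "b < m" and mp: "m + p - 1 = a" using p ab by (auto simp: m_def)
  have 1: "Fp_eq p [(a, False), (b, False)] [(b, False), (m, False), (m, True), (b, True), (a, False), (b, False)]"
  proof -
    have x1: "Fp_eq p [(b, False), (m, False), (m, True), (b, True), (a, False), (b, False)] [(b, False), (b, True), (a, False), (b, False)]"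
      using canc[of p "[(b, False)]" m False "[(b, True), (a, False), (b, False)]"] by simp
    have x2: "Fp_eq p [(b, False), (b, True), (a, False), (b, False)] [(a, False), (b, False)]"
      using canc[of p "[]" b False "[(a, False), (b, False)]"] by simp
    show ?thesis using x1 x2 by (meson Fp_eq.sym Fp_eq.trans)
  qed
  have 2: "Fp_eq p [(b, False), (m, False), (m, True), (b, True), (a, False), (b, False)] [(b, False), (m, False), (b, True), (a, True), (a, False), (b, False)]"
    using Fp_eq.rel[OF bm, of p "[(b, False), (m, False)]" "[(a, False), (b, False)]"] mp by simp
  have 3: "Fp_eq p [(b, False), (m, False), (b, True), (a, True), (a, False), (b, False)] [(b, False), (m, False), (b, True), (b, False)]"
    using canc[of p "[(b, False), (m, False), (b, True)]" a True "[(b, False)]"] by simp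
  have 4: "Fp_eq p [(b, False), (m, False), (b, True), (b, False)] [(b, False), (m, False)]"
    using canc[of p "[(b, False), (m, False)]" b True "[]"] by simp
  show ?thesis using 1 2 3 4 unfolding m_def by (meson Fp_eq.trans)
qed

lemma sq_sound: "sq_step p s s' \<Longrightarrow> Fp_eq p (map fst s) (map fst s')"
proof (induction rule: sq_step.induct)
  case (gt b a u l m v) thus ?case using Fp_ctx[OF sound_sq_gt[OF gt]] by simp
next
  case (lt a b u l m v) thus ?case using Fp_ctx[OF sound_sq_lt[OF lt]] by simp
next
  case (eq a b u l m v) thus ?case using Fp_ctx[OF sound_sq_eq[of p a]] by simp
qed

lemma tl_sound: "tl_step p s s' \<Longrightarrow> p \<ge> 2 \<Longrightarrow> Fp_eq p (map fst s) (map fst s')"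
proof (induction rule: tl_step.induct)
  case (pos a b u l m v) thus ?case using Fp_ctx[OF sound_tl_pos[OF pos.prems pos.hyps]] by simp
next
  case (neg b a u l m v) thus ?case using Fp_ctx[OF sound_tl_neg[OF neg.prems neg.hyps]] by simp
qed

lemma rtc_sound: "R\<^sup>*\<^sup>* s s' \<Longrightarrow> (\<And>s s'. R s s' \<Longrightarrow> Fp_eq p (map fst s) (map fst s')) \<Longrightarrow> Fp_eq p (map fst s) (map fst s')"
proof (induction rule: rtranclp_induct)
  case base show ?case by (rule Fp_eq.refl)
next
  case (step y z) thus ?case by (meson Fp_eq.trans)
qed

lemma cancel_all: "Fp_eq p (map (\<lambda>i. (i, True)) (rev js) @ map (\<lambda>i. (i, False)) js) []"
proof (induction js)
  case Nil thus ?case by (simp add: Fp_eq.refl)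
next
  case (Cons i js)
  have "Fp_eq p (map (\<lambda>i. (i, True)) (rev js) @ [(i, True), (i, \<not> True)] @ map (\<lambda>i. (i, False)) js)
     (map (\<lambda>i. (i, True)) (rev js) @ map (\<lambda>i. (i, False)) js)" by (rule canc)
  thus ?case using Cons by (simp, meson Fp_eq.trans)
qed




definition flip :: "nat list \<Rightarrow> nat \<Rightarrow> nat \<Rightarrow> bool" where
  "flip ls a b \<longleftrightarrow> (a < b \<and> bef ls b a) \<or> (b < a \<and> bef ls a b)"

lemma flip_swap:
  assumes "distinct (lu @ [l, m] @ lv)" "l < m"
  shows "flip (lu @ [m, l] @ lv) x y \<longleftrightarrow> flip (lu @ [l, m] @ lv) x y \<or> (x = l \<and> y = m) \<or> (x = m \<and> y = l)"
proof -
  have b1: "bef (lu @ [l, m] @ lv) l m" by (simp add: bef_append)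
  have b2: "\<not> bef (lu @ [l, m] @ lv) m l" using bef_asym[OF assms(1) b1] .
  show ?thesis unfolding flip_def bef_swap[OF assms(1)] using b1 b2 assms(2) by auto
qed

lemma sum_bump:
  assumes "\<And>r. r < R \<Longrightarrow> Q r = (P r \<or> r = j)" "j < R \<Longrightarrow> \<not> P j"
  shows "(\<Sum>r<(R::nat). of_bool (Q r) :: int) = (\<Sum>r<R. of_bool (P r)) + of_bool (j < R)"
proof (cases "j < R")
  case True
  have "(\<Sum>r<R. of_bool (Q r) :: int) = of_bool (Q j) + (\<Sum>r\<in>{..<R} - {j}. of_bool (Q r))"
    using True by (subst sum.remove[of "{..<R}" j]) auto
  also have "(\<Sum>r\<in>{..<R} - {j}. of_bool (Q r) :: int) = (\<Sum>r\<in>{..<R} - {j}. of_bool (P r))"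
    using assms(1) by (intro sum.cong) auto
  also have "(\<Sum>r<R. of_bool (P r) :: int) = of_bool (P j) + (\<Sum>r\<in>{..<R} - {j}. of_bool (P r))"
    using True by (subst sum.remove[of "{..<R}" j]) auto
  ultimately show ?thesis using True assms by auto
next
  case False
  thus ?thesis using assms(1) by (auto intro!: sum.cong)
qed

lemma sum_bool_bounds: "0 \<le> (\<Sum>r<R. of_bool (Q r) :: int) \<and> (\<Sum>r<R. of_bool (Q r) :: int) \<le> int R"
proof -
  have "(\<Sum>r<R. of_bool (Q r) :: int) \<le> (\<Sum>r<R. 1)" by (intro sum_mono) auto
  thus ?thesis by (auto intro: sum_nonneg)
qed

lemma sum_bool_diff_bounds: "- int R \<le> (\<Sum>r<R. of_bool (Q r) - of_bool (Q' r) :: int) \<and> (\<Sum>r<R. of_bool (Q r) - of_bool (Q' r) :: int) \<le> int R"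
proof -
  have "(\<Sum>r<R. of_bool (Q r) - of_bool (Q' r) :: int) \<le> (\<Sum>r<R. 1)" by (intro sum_mono) auto
  moreover have "(\<Sum>r<R. -1) \<le> (\<Sum>r<R. of_bool (Q r) - of_bool (Q' r) :: int)" by (intro sum_mono) auto
  ultimately show ?thesis by auto
qed

lemma bef_nth: "i < j \<Longrightarrow> j < length xs \<Longrightarrow> bef xs (xs ! i) (xs ! j)"
proof (induction xs arbitrary: i j)
  case Nil thus ?case by simp
next
  case (Cons x xs)
  show ?case
  proof (cases i)
    case 0 thus ?thesis using Cons.prems by (cases j) auto
  next
    case (Suc i') thus ?thesis using Cons by (cases j) auto
  qed
qed

lemma bef_irrefl: "distinct xs \<Longrightarrow> \<not> bef xs a a"
  using bef_asym by blast

lemma bef_nth_iff: "bef xs a b \<longleftrightarrow> (\<exists>i j. i < j \<and> j < length xs \<and> xs ! i = a \<and> xs ! j = b)"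
proof (induction xs)
  case Nil thus ?case by simp
next
  case (Cons x xs)
  show ?case
  proof
    assume "bef (x # xs) a b"
    then consider "x = a" "b \<in> set xs" | "bef xs a b" by auto
    thus "\<exists>i j. i < j \<and> j < length (x # xs) \<and> (x # xs) ! i = a \<and> (x # xs) ! j = b"
    proof cases
      case 1
      then obtain j where "j < length xs" "xs ! j = b" by (auto simp: in_set_conv_nth)
      thus ?thesis using 1 by (intro exI[of _ 0] exI[of _ "Suc j"]) auto
    next
      case 2
      then obtain i j where "i < j \<and> j < length xs \<and> xs ! i = a \<and> xs ! j = b" using Cons.IH by auto
      thus ?thesis by (intro exI[of _ "Suc i"] exI[of _ "Suc j"]) auto
    qed
  next
    assume "\<exists>i j. i < j \<and> j < length (x # xs) \<and> (x # xs) ! i = a \<and> (x # xs) ! j = b"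
    then obtain i j where ij: "i < j" "j < length (x # xs)" "(x # xs) ! i = a" "(x # xs) ! j = b" by blast
    then obtain j' where j': "j = Suc j'" by (cases j) auto
    show "bef (x # xs) a b"
    proof (cases i)
      case 0 thus ?thesis using ij j' by (auto simp: in_set_conv_nth)
    next
      case (Suc i')
      hence "bef xs a b" using Cons.IH ij j' by auto
      thus ?thesis by simp
    qed
  qed
qed

locale constr =
  fixes p d :: nat and t :: "nat \<Rightarrow> nat" and c :: "nat \<Rightarrow> nat"
  assumes p2: "p \<ge> 2" and evd: "even d" and perm: "t permutes {1..d}"
    and cmono: "\<And>r r'. r' < r \<Longrightarrow> r < d div 2 \<Longrightarrow> c r' < c r"
begin

definition "k = d div 2"
definition "P1 = int p - 1"
definition "it = inv t"
definition "sg l \<longleftrightarrow> t l \<le> k"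
definition "lev l = (if t l \<le> k then k - t l else t l - Suc k)"
definition "pm r = it (k - r)"
definition "nm r = it (Suc (k + r))"
definition "G = 6 * (P1 * int k)"
definition "base = 3 * (P1 * int k)"
definition "L r = base + int (c r) + int r * G"
definition "A r = (\<Sum>r'<r. of_bool (nm r' < pm r) - of_bool (pm r' < pm r) :: int)"
definition "B r = (\<Sum>r'<r. of_bool (nm r < pm r') - of_bool (nm r < nm r') :: int)"
definition "V l = (if sg l then L (lev l) else L (lev l) + P1 * (A (lev l) - B (lev l)))"
definition "opp l r = (if sg l then nm r else pm r)"
definition "same l r = (if sg l then pm r else nm r)"
definition "gain s l = (\<Sum>r'<lev l. of_bool (flip (map snd s) l (opp l r')) :: int)"
definition "V1 l = V l + P1 * (\<Sum>r'<lev l. of_bool (if sg l then nm r' < l else l < pm r') :: int)"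
definition "loss s l = (\<Sum>r'<lev l. of_bool (flip (map snd s) l (same l r')) :: int)"
definition "word = map (\<lambda>l. (nat (V l), sg l)) [1..<Suc d]"
definition "F r = L r + P1 * A r"

lemma d2k: "d = 2 * k" using evd unfolding k_def by auto
lemma P1pos: "P1 \<ge> 1" using p2 unfolding P1_def by auto

lemma t_range: "l \<in> {1..d} \<Longrightarrow> t l \<in> {1..d}" using permutes_in_image[OF perm] by auto
lemma it_range: "l \<in> {1..d} \<Longrightarrow> it l \<in> {1..d}"
  using permutes_in_image[OF permutes_inv[OF perm]] unfolding it_def by auto
lemma t_it[simp]: "t (it x) = x" unfolding it_def using permutes_inverses[OF perm] by auto
lemma it_t[simp]: "it (t x) = x" unfolding it_def using permutes_inverses[OF perm] by auto

lemma pm_props: "r < k \<Longrightarrow> pm r \<in> {1..d} \<and> sg (pm r) \<and> lev (pm r) = r \<and> t (pm r) = k - r"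
proof -
  assume "r < k"
  hence "k - r \<in> {1..d}" using d2k by auto
  from it_range[OF this] show ?thesis using \<open>r < k\<close> unfolding pm_def sg_def lev_def by auto
qed
lemma nm_props: "r < k \<Longrightarrow> nm r \<in> {1..d} \<and> \<not> sg (nm r) \<and> lev (nm r) = r \<and> t (nm r) = Suc (k + r)"
proof -
  assume "r < k"
  hence "Suc (k + r) \<in> {1..d}" using d2k by auto
  from it_range[OF this] show ?thesis using \<open>r < k\<close> unfolding nm_def sg_def lev_def by auto
qed
lemma lev_lt: "l \<in> {1..d} \<Longrightarrow> lev l < k"
  using t_range[of l] d2k unfolding lev_def by auto
lemma pm_lev: "l \<in> {1..d} \<Longrightarrow> sg l \<Longrightarrow> pm (lev l) = l"
proof -
  assume a: "l \<in> {1..d}" "sg l"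
  hence "k - (k - t l) = t l" using t_range[of l] unfolding sg_def by auto
  thus ?thesis using a unfolding lev_def sg_def pm_def by simp
qed
lemma nm_lev: "l \<in> {1..d} \<Longrightarrow> \<not> sg l \<Longrightarrow> nm (lev l) = l"
proof -
  assume a: "l \<in> {1..d}" "\<not> sg l"
  hence "Suc (k + (t l - Suc k)) = t l" using t_range[of l] unfolding sg_def by auto
  thus ?thesis using a unfolding lev_def sg_def nm_def by simp
qed
lemma same_lev_eq: "l \<in> {1..d} \<Longrightarrow> m \<in> {1..d} \<Longrightarrow> sg l = sg m \<Longrightarrow> lev l = lev m \<Longrightarrow> l = m"
  by (metis nm_lev pm_lev)

lemma A_bd: "- int r \<le> A r \<and> A r \<le> int r" unfolding A_def by (rule sum_bool_diff_bounds)
lemma B_bd: "- int r \<le> B r \<and> B r \<le> int r" unfolding B_def by (rule sum_bool_diff_bounds)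

lemma V_bd: "l \<in> {1..d} \<Longrightarrow> L (lev l) - 2 * (P1 * int (lev l)) \<le> V l \<and> V l \<le> L (lev l) + 2 * (P1 * int (lev l))"
proof -
  assume "l \<in> {1..d}"
  have "- (2 * int (lev l)) \<le> A (lev l) - B (lev l)" "A (lev l) - B (lev l) \<le> 2 * int (lev l)"
    using A_bd[of "lev l"] B_bd[of "lev l"] by auto
  hence "P1 * (- (2 * int (lev l))) \<le> P1 * (A (lev l) - B (lev l))" "P1 * (A (lev l) - B (lev l)) \<le> P1 * (2 * int (lev l))"
    using P1pos by (auto intro!: mult_left_mono simp del: mult_minus_right)
  thus ?thesis unfolding V_def using P1pos by (auto simp: algebra_simps)
qed

definition "inb l x \<longleftrightarrow> L (lev l) - 3 * (P1 * int (lev l)) \<le> x \<and> x \<le> L (lev l) + 3 * (P1 * int (lev l))"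

lemma inb_intro:
  assumes "l \<in> {1..d}" "0 \<le> g" "g \<le> int (lev l)" "0 \<le> h" "h \<le> int (lev l)"
  shows "inb l (V l + P1 * g - P1 * h)"
proof -
  have "P1 * g \<le> P1 * int (lev l)" "P1 * h \<le> P1 * int (lev l)" "0 \<le> P1 * g" "0 \<le> P1 * h"
    using assms P1pos by (auto intro: mult_left_mono)
  thus ?thesis using V_bd[OF assms(1)] unfolding inb_def by auto
qed

lemma L_gap: "r' < r \<Longrightarrow> r < k \<Longrightarrow> L r' + G + 1 \<le> L r"
proof -
  assume a: "r' < r" "r < k"
  have "c r' < c r" using cmono a unfolding k_def by auto
  have "G \<ge> 0" unfolding G_def using P1pos by auto
  have "1 \<le> int r - int r'" using a by auto
  hence "1 * G \<le> (int r - int r') * G" using \<open>G \<ge> 0\<close> by (intro mult_right_mono) auto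
  thus ?thesis unfolding L_def using \<open>c r' < c r\<close> by (auto simp: algebra_simps)
qed

lemma sep:
  assumes "l \<in> {1..d}" "l' \<in> {1..d}" "lev l' < lev l" "inb l x" "inb l' y"
  shows "y + P1 < x"
proof -
  have k: "lev l < k" using lev_lt assms by auto
  have g: "L (lev l') + G + 1 \<le> L (lev l)" using L_gap assms k by auto
  have "int (lev l) \<le> int k - 1" "int (lev l') \<le> int k - 2" using k assms by auto
  hence "P1 * int (lev l) \<le> P1 * (int k - 1)" "P1 * int (lev l') \<le> P1 * (int k - 2)"
    using P1pos by (auto intro: mult_left_mono)
  thus ?thesis using assms(4,5) g P1pos unfolding inb_def G_def by (auto simp: algebra_simps)
qed

end



lemma adj_bef:
  assumes "distinct (lu @ [l, m] @ lv)" "x \<noteq> l" "x \<noteq> m"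
  shows "bef (lu @ [l, m] @ lv) x l \<longleftrightarrow> x \<in> set lu"
    and "bef (lu @ [l, m] @ lv) x m \<longleftrightarrow> x \<in> set lu"
    and "bef (lu @ [l, m] @ lv) l x \<longleftrightarrow> x \<in> set lv"
    and "bef (lu @ [l, m] @ lv) m x \<longleftrightarrow> x \<in> set lv"
  using assms by (auto simp: bef_append dest: bef_in)

context constr begin

definition SQI :: "lword \<Rightarrow> bool" where
  "SQI s \<longleftrightarrow> distinct (map snd s) \<and> set (map snd s) = {1..d} \<and>
    (\<forall>q\<in>set s. snd (fst q) = sg (snd q) \<and> int (fst (fst q)) = V (snd q) + P1 * gain s (snd q)) \<and>
    (\<forall>a b. a \<in> {1..d} \<longrightarrow> b \<in> {1..d} \<longrightarrow> a < b \<longrightarrow> (sg a = sg b \<or> (sg a \<and> \<not> sg b)) \<longrightarrow> bef (map snd s) a b)"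

lemma gain_bd: "0 \<le> gain s l \<and> gain s l \<le> int (lev l)"
  unfolding gain_def by (rule sum_bool_bounds)

lemma sq_adj_basic:
  assumes "SQI s" "s = u @ [((a, False), l), ((b, True), m)] @ v"
  shows "l \<in> {1..d} \<and> m \<in> {1..d} \<and> \<not> sg l \<and> sg m \<and> l < m \<and> int a = V l + P1 * gain s l
     \<and> int b = V m + P1 * gain s m \<and> distinct (map snd u @ [l, m] @ map snd v)"
proof -
  have ds: "distinct (map snd u @ [l, m] @ map snd v)" using assms unfolding SQI_def by auto
  have lm: "l \<in> {1..d}" "m \<in> {1..d}" using assms unfolding SQI_def by (auto simp: image_iff)
  have q: "\<not> sg l" "sg m" "int a = V l + P1 * gain s l" "int b = V m + P1 * gain s m"
    using assms unfolding SQI_def by auto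
  have "bef (map snd s) l m" using assms(2) by (simp add: bef_append)
  moreover have "\<not> (m < l)"
  proof
    assume "m < l"
    hence "bef (map snd s) m l" using assms(1) lm q unfolding SQI_def by auto
    thus False using \<open>bef (map snd s) l m\<close> bef_asym ds assms(2) by auto
  qed
  moreover have "l \<noteq> m" using ds by auto
  ultimately show ?thesis using ds lm q by auto
qed

lemma inb_sq: "l \<in> {1..d} \<Longrightarrow> inb l (V l + P1 * gain s l)"
  using inb_intro[of l "gain s l" 0] gain_bd[of s l] by auto

lemma sq_exact:
  assumes "SQI s" "s = u @ [((a, False), l), ((b, True), m)] @ v" "lev l = lev m"
  shows "a = b"
proof -
  note bas = sq_adj_basic[OF assms(1,2)]
  define r where "r = lev l"
  define ls where "ls = map snd s"
  have lsdef: "ls = map snd u @ [l, m] @ map snd v" using assms(2) ls_def by simp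
  have ds: "distinct ls" using bas lsdef by simp
  have rk: "r < k" using lev_lt bas r_def by auto
  have lnm: "l = nm r" using nm_lev bas r_def by auto
  have mpm: "m = pm r" using pm_lev bas r_def assms(3) by auto
  have inv: "\<And>a b. a \<in> {1..d} \<Longrightarrow> b \<in> {1..d} \<Longrightarrow> a < b \<Longrightarrow> (sg a = sg b \<or> (sg a \<and> \<not> sg b)) \<Longrightarrow> bef ls a b"
    using assms(1) unfolding SQI_def ls_def by blast
  have fx: "flip ls l (pm r') \<longleftrightarrow> l < pm r' \<and> pm r' < m" if "r' < r" for r'
  proof -
    have x: "pm r' \<in> {1..d}" "sg (pm r')" "lev (pm r') = r'" using pm_props[of r'] that rk by auto
    have xl: "pm r' \<noteq> l" "pm r' \<noteq> m" using x bas that r_def assms(3) by auto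
    show ?thesis
    proof (cases "pm r' < l")
      case True
      hence "bef ls (pm r') l" using inv x bas by auto
      hence "\<not> bef ls l (pm r')" using bef_asym ds by auto
      thus ?thesis using True unfolding flip_def by auto
    next
      case False
      hence lx: "l < pm r'" using xl by auto
      show ?thesis
      proof (cases "pm r' < m")
        case True
        hence "bef ls (pm r') m" using inv x bas by auto
        hence "pm r' \<in> set (map snd u)" using adj_bef(2)[of "map snd u" l m "map snd v" "pm r'"] ds lsdef xl by auto
        hence "bef ls (pm r') l" using adj_bef(1)[of "map snd u" l m "map snd v" "pm r'"] ds lsdef xl by auto
        thus ?thesis using lx True unfolding flip_def by auto
      next
        case False
        hence "m < pm r'" using xl by auto
        hence "bef ls m (pm r')" using inv x bas by auto
        hence "pm r' \<in> set (map snd v)" using adj_bef(4)[of "map snd u" l m "map snd v" "pm r'"] ds lsdef xl by auto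
        hence "bef ls l (pm r')" using adj_bef(3)[of "map snd u" l m "map snd v" "pm r'"] ds lsdef xl by auto
        hence "\<not> bef ls (pm r') l" using bef_asym ds by auto
        thus ?thesis using lx False unfolding flip_def by auto
      qed
    qed
  qed
  have fy: "flip ls m (nm r') \<longleftrightarrow> l < nm r' \<and> nm r' < m" if "r' < r" for r'
  proof -
    have x: "nm r' \<in> {1..d}" "\<not> sg (nm r')" "lev (nm r') = r'" using nm_props[of r'] that rk by auto
    have xl: "nm r' \<noteq> l" "nm r' \<noteq> m" using x bas that r_def assms(3) by auto
    show ?thesis
    proof (cases "m < nm r'")
      case True
      hence "bef ls m (nm r')" using inv x bas by auto
      hence "\<not> bef ls (nm r') m" using bef_asym ds by auto
      thus ?thesis using True unfolding flip_def by auto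
    next
      case False
      hence ym: "nm r' < m" using xl by auto
      show ?thesis
      proof (cases "nm r' < l")
        case True
        hence "bef ls (nm r') l" using inv x bas by auto
        hence "nm r' \<in> set (map snd u)" using adj_bef(1)[of "map snd u" l m "map snd v" "nm r'"] ds lsdef xl by auto
        hence "\<not> nm r' \<in> set (map snd v)" using ds lsdef by auto
        hence "\<not> bef ls m (nm r')" using adj_bef(4)[of "map snd u" l m "map snd v" "nm r'"] ds lsdef xl by auto
        thus ?thesis using ym True unfolding flip_def by auto
      next
        case False
        hence "l < nm r'" using xl by auto
        hence "bef ls l (nm r')" using inv x bas by auto
        hence "nm r' \<in> set (map snd v)" using adj_bef(3)[of "map snd u" l m "map snd v" "nm r'"] ds lsdef xl by auto
        hence "bef ls m (nm r')" using adj_bef(4)[of "map snd u" l m "map snd v" "nm r'"] ds lsdef xl by auto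
        thus ?thesis using ym \<open>l < nm r'\<close> unfolding flip_def by auto
      qed
    qed
  qed
  have gl: "gain s l = (\<Sum>r'<r. of_bool (l < pm r' \<and> pm r' < m))"
    unfolding gain_def r_def ls_def[symmetric] opp_def using bas fx r_def by (auto intro!: sum.cong)
  have gm: "gain s m = (\<Sum>r'<r. of_bool (l < nm r' \<and> nm r' < m))"
    unfolding gain_def ls_def[symmetric] opp_def using bas fy r_def assms(3) by (auto intro!: sum.cong)
  have Vl: "V l = L r + P1 * (A r - B r)" using bas unfolding V_def r_def by auto
  have Vm: "V m = L r" using bas assms(3) unfolding V_def r_def by auto
  define T where "T r' = (of_bool (nm r' < m) - of_bool (pm r' < m) - (of_bool (l < pm r') - of_bool (l < nm r'))
      + of_bool (l < pm r' \<and> pm r' < m) - of_bool (l < nm r' \<and> nm r' < m) :: int)" for r'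
  have T0: "T r' = 0" for r' using bas unfolding T_def by (auto simp: of_bool_def)
  have "A r - B r + gain s l - gain s m = (\<Sum>r'<r. T r')"
    unfolding A_def B_def gl gm T_def using lnm mpm
    by (simp add: sum.distrib sum_subtractf)
  hence "A r - B r + gain s l - gain s m = 0" using T0 by simp
  hence "P1 * (A r - B r + gain s l - gain s m) = 0" by simp
  hence "int a = int b" using bas Vl Vm by (simp add: algebra_simps)
  thus ?thesis by simp
qed

lemma sq_levs:
  assumes "SQI s" "s = u @ [((a, False), l), ((b, True), m)] @ v"
  shows "(b < a \<longrightarrow> lev m < lev l) \<and> (a < b \<longrightarrow> lev l < lev m) \<and> (a = b \<longrightarrow> lev l = lev m)"
proof -
  note bas = sq_adj_basic[OF assms]
  have ia: "inb l (int a)" and ib: "inb m (int b)" using bas inb_sq by auto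
  consider "lev l < lev m" | "lev m < lev l" | "lev l = lev m" by linarith
  thus ?thesis
  proof cases
    case 1 thus ?thesis using sep[OF _ _ 1 ib ia] bas P1pos by auto
  next
    case 2 thus ?thesis using sep[OF _ _ 2 ia ib] bas P1pos by auto
  next
    case 3 thus ?thesis using sq_exact[OF assms 3] by auto
  qed
qed

end



context constr begin

lemma pm_eq_iff: "r < k \<Longrightarrow> m \<in> {1..d} \<Longrightarrow> sg m \<Longrightarrow> pm r = m \<longleftrightarrow> r = lev m"
  using pm_props pm_lev by auto
lemma nm_eq_iff: "r < k \<Longrightarrow> m \<in> {1..d} \<Longrightarrow> \<not> sg m \<Longrightarrow> nm r = m \<longleftrightarrow> r = lev m"
  using nm_props nm_lev by auto

lemma sq_core:
  assumes "SQI s" "s = u @ [((a, False), l), ((b, True), m)] @ v"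
    "s' = u @ [((b', True), m), ((a', False), l)] @ v"
    "int a' = V l + P1 * (gain s l + of_bool (lev m < lev l))"
    "int b' = V m + P1 * (gain s m + of_bool (lev l < lev m))"
  shows "SQI s'"
proof -
  note bas = sq_adj_basic[OF assms(1,2)]
  define lu where "lu = map snd u"
  define lv where "lv = map snd v"
  have ls: "map snd s = lu @ [l, m] @ lv" and ls': "map snd s' = lu @ [m, l] @ lv"
    using assms(2,3) lu_def lv_def by auto
  have ds: "distinct (lu @ [l, m] @ lv)" using bas lu_def lv_def by simp
  have fl: "flip (map snd s') x y \<longleftrightarrow> flip (map snd s) x y \<or> (x = l \<and> y = m) \<or> (x = m \<and> y = l)" for x y
    unfolding ls ls' using flip_swap[OF ds] bas by auto
  have nfl: "\<not> flip (map snd s) l m"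
    unfolding ls flip_def using bef_asym[OF ds, of l m] bas by (auto simp: bef_append)
  have g_other: "gain s' z = gain s z" if "z \<noteq> l" "z \<noteq> m" for z
    unfolding gain_def using fl that by auto
  have lk: "lev l < k" "lev m < k" using bas lev_lt by auto
  have g_l: "gain s' l = gain s l + of_bool (lev m < lev l)"
    unfolding gain_def
  proof (rule sum_bump)
    fix r assume r: "r < lev l"
    have "opp l r = pm r" using bas opp_def by auto
    moreover have "pm r \<noteq> l" using pm_props[of r] r lk bas by auto
    ultimately show "flip (map snd s') l (opp l r) = (flip (map snd s) l (opp l r) \<or> r = lev m)"
      using fl pm_eq_iff[of r m] r lk bas by auto
  next
    show "\<not> flip (map snd s) l (opp l (lev m))" using nfl pm_lev bas opp_def by auto
  qed
  have g_m: "gain s' m = gain s m + of_bool (lev l < lev m)"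
    unfolding gain_def
  proof (rule sum_bump)
    fix r assume r: "r < lev m"
    have "opp m r = nm r" using bas opp_def by auto
    moreover have "nm r \<noteq> m" using nm_props[of r] r lk bas by auto
    ultimately show "flip (map snd s') m (opp m r) = (flip (map snd s) m (opp m r) \<or> r = lev l)"
      using fl nm_eq_iff[of r l] r lk bas by auto
  next
    have "flip (map snd s) m l = flip (map snd s) l m" unfolding flip_def by auto
    thus "\<not> flip (map snd s) m (opp m (lev l))" using nfl nm_lev bas opp_def by auto
  qed
  have I1: "distinct (map snd s') \<and> set (map snd s') = {1..d}"
    using assms(1) ls ls' unfolding SQI_def by auto
  have I2: "\<forall>q\<in>set s'. snd (fst q) = sg (snd q) \<and> int (fst (fst q)) = V (snd q) + P1 * gain s' (snd q)"
  proof
    fix q assume q: "q \<in> set s'"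
    show "snd (fst q) = sg (snd q) \<and> int (fst (fst q)) = V (snd q) + P1 * gain s' (snd q)"
    proof (cases "q \<in> set u \<union> set v")
      case True
      hence "q \<in> set s" using assms(2) by auto
      moreover have "snd q \<noteq> l" "snd q \<noteq> m" using True ds lu_def lv_def by (auto simp: image_iff)
      ultimately show ?thesis using assms(1) g_other unfolding SQI_def by auto
    next
      case False
      hence "q = ((b', True), m) \<or> q = ((a', False), l)" using q assms(3) by auto
      thus ?thesis using bas g_l g_m assms(4,5) by auto
    qed
  qed
  have I3: "\<forall>x y. x \<in> {1..d} \<longrightarrow> y \<in> {1..d} \<longrightarrow> x < y \<longrightarrow> (sg x = sg y \<or> (sg x \<and> \<not> sg y)) \<longrightarrow> bef (map snd s') x y"
  proof (intro allI impI)
    fix x y assume h: "x \<in> {1..d}" "y \<in> {1..d}" "x < y" "sg x = sg y \<or> (sg x \<and> \<not> sg y)"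
    hence "bef (map snd s) x y" using assms(1) unfolding SQI_def by blast
    moreover have "\<not> (x = l \<and> y = m)" using h bas by auto
    ultimately show "bef (map snd s') x y" unfolding ls ls' using bef_swap[OF ds] by auto
  qed
  show ?thesis unfolding SQI_def using I1 I2 I3 by blast
qed

lemma sq_pres: "sq_step p s s' \<Longrightarrow> SQI s \<Longrightarrow> SQI s'"
proof (induction rule: sq_step.induct)
  case (gt a b u l m v)
  let ?s = "u @ [((a, False), l), ((b, True), m)] @ v"
  note bas = sq_adj_basic[OF gt.prems HOL.refl]
  have "lev m < lev l" using sq_levs[OF gt.prems HOL.refl] gt.hyps by auto
  show ?case by (rule sq_core[OF gt.prems HOL.refl HOL.refl]) (use bas p2 \<open>lev m < lev l\<close> in \<open>auto simp: P1_def algebra_simps of_nat_diff\<close>)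
next
  case (lt a b u l m v)
  note bas = sq_adj_basic[OF lt.prems HOL.refl]
  have "lev l < lev m" using sq_levs[OF lt.prems HOL.refl] lt.hyps by auto
  show ?case by (rule sq_core[OF lt.prems HOL.refl HOL.refl]) (use bas p2 \<open>lev l < lev m\<close> in \<open>auto simp: P1_def algebra_simps of_nat_diff\<close>)
next
  case (eq a b u l m v)
  note bas = sq_adj_basic[OF eq.prems[unfolded eq.hyps] HOL.refl]
  have "lev l = lev m" using sq_levs[OF eq.prems[unfolded eq.hyps] HOL.refl] by auto
  thus ?case using sq_core[OF eq.prems[unfolded eq.hyps] HOL.refl HOL.refl, of b b] bas eq.hyps by auto
qed

lemma sq_pres_rtc: "(sq_step p)\<^sup>*\<^sup>* s s' \<Longrightarrow> SQI s \<Longrightarrow> SQI s'"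
  by (induction rule: rtranclp_induct) (auto intro: sq_pres)

lemma sq_final_posneg:
  assumes "SQI s" "\<not> (\<exists>s'. sq_step p s s')" "x \<in> {1..d}" "y \<in> {1..d}" "sg x" "\<not> sg y"
  shows "bef (map snd s) x y"
proof (rule ccontr)
  assume nb: "\<not> bef (map snd s) x y"
  have ds: "distinct (map snd s)" and st: "set (map snd s) = {1..d}" using assms(1) unfolding SQI_def by auto
  have "x \<noteq> y" using assms by auto
  hence "bef (map snd s) y x" using bef_total[of x "map snd s" y] nb st assms by auto
  moreover have "\<forall>q\<in>set s. snd q = y \<longrightarrow> \<not> snd (fst q)" "\<forall>q\<in>set s. snd q = x \<longrightarrow> snd (fst q)"
    using assms(1,5,6) unfolding SQI_def by auto
  ultimately obtain u q1 q2 v where dec: "s = u @ [q1, q2] @ v" "\<not> snd (fst q1)" "snd (fst q2)"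
    using bef_ascent[of snd s y x "\<lambda>q. snd (fst q)"] by blast
  obtain a l where q1: "q1 = ((a, False), l)" using dec(2) by (cases q1) auto
  obtain b m where q2: "q2 = ((b, True), m)" using dec(3) by (cases q2) (auto)
  have "\<exists>s'. sq_step p s s'"
  proof (cases a b rule: linorder_cases)
    case less thus ?thesis using sq_step.lt[OF less, of p u l m v] dec q1 q2 by auto
  next
    case equal thus ?thesis using sq_step.eq[OF equal, of p u l m v] dec q1 q2 by auto
  next
    case greater thus ?thesis using sq_step.gt[OF greater, of p u l m v] dec q1 q2 by auto
  qed
  thus False using assms(2) by blast
qed

lemma sq_init: "SQI (label word)"
proof -
  have lw: "label word = map (\<lambda>l. ((nat (V l), sg l), l)) [1..<Suc d]"
    unfolding label_def word_def by (simp add: zip_map1 zip_same_conv_map)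
  have ms: "map snd (label word) = [1..<Suc d]" unfolding lw by (simp add: o_def del: upt_Suc)
  have g0: "gain (label word) l = 0" for l
    unfolding gain_def ms flip_def bef_upt by auto
  have Vnn: "V l \<ge> 0" if "l \<in> {1..d}" for l
  proof -
    have "lev l < k" using lev_lt that by auto
    hence "P1 * int (lev l) \<le> P1 * int k" using P1pos by (intro mult_left_mono) auto
    moreover have "int r * G \<ge> 0" for r unfolding G_def using P1pos by auto
    ultimately show ?thesis using V_bd[OF that] unfolding L_def base_def by (smt (verit) of_nat_0_le_iff)
  qed
  show ?thesis unfolding SQI_def
  proof (intro conjI)
    show "distinct (map snd (label word))" "set (map snd (label word)) = {1..d}" unfolding ms by auto
    show "\<forall>q\<in>set (label word). snd (fst q) = sg (snd q) \<and> int (fst (fst q)) = V (snd q) + P1 * gain (label word) (snd q)"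
    proof
      fix q assume "q \<in> set (label word)"
      then obtain l where "l \<in> {1..d}" "q = ((nat (V l), sg l), l)" unfolding lw by auto
      thus "snd (fst q) = sg (snd q) \<and> int (fst (fst q)) = V (snd q) + P1 * gain (label word) (snd q)"
        using Vnn g0 by auto
    qed
    show "\<forall>a b. a \<in> {1..d} \<longrightarrow> b \<in> {1..d} \<longrightarrow> a < b \<longrightarrow> (sg a = sg b \<or> sg a \<and> \<not> sg b) \<longrightarrow> bef (map snd (label word)) a b"
      unfolding ms bef_upt by auto
  qed
qed

end



context constr begin

definition TLI :: "lword \<Rightarrow> bool" where
  "TLI s \<longleftrightarrow> distinct (map snd s) \<and> set (map snd s) = {1..d} \<and>
    (\<forall>q\<in>set s. snd (fst q) = sg (snd q) \<and> int (fst (fst q)) = V1 (snd q) - P1 * loss s (snd q)) \<and>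
    (\<forall>a b. a \<in> {1..d} \<longrightarrow> b \<in> {1..d} \<longrightarrow> sg a \<longrightarrow> \<not> sg b \<longrightarrow> bef (map snd s) a b) \<and>
    (\<forall>a b. a \<in> {1..d} \<longrightarrow> b \<in> {1..d} \<longrightarrow> sg a = sg b \<longrightarrow> a < b \<longrightarrow> bef (map snd s) b a \<longrightarrow>
        (if sg a then lev a < lev b else lev b < lev a))"

lemma loss_bd: "0 \<le> loss s l \<and> loss s l \<le> int (lev l)"
  unfolding loss_def by (rule sum_bool_bounds)

lemma inb_tl: "l \<in> {1..d} \<Longrightarrow> inb l (V1 l - P1 * loss s l)"
proof -
  assume l: "l \<in> {1..d}"
  define g where "g = (\<Sum>r'<lev l. of_bool (if sg l then nm r' < l else l < pm r') :: int)"
  have "0 \<le> g \<and> g \<le> int (lev l)" unfolding g_def by (rule sum_bool_bounds)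
  hence "inb l (V l + P1 * g - P1 * loss s l)" using inb_intro[OF l] loss_bd[of s l] by auto
  thus ?thesis unfolding V1_def g_def by simp
qed

lemma tl_init:
  assumes "SQI s" "\<not> (\<exists>s'. sq_step p s s')"
  shows "TLI s"
proof -
  define ls where "ls = map snd s"
  have ds: "distinct ls" and st: "set ls = {1..d}" using assms(1) unfolding SQI_def ls_def by auto
  have pn: "\<And>x y. x \<in> {1..d} \<Longrightarrow> y \<in> {1..d} \<Longrightarrow> sg x \<Longrightarrow> \<not> sg y \<Longrightarrow> bef ls x y"
    using sq_final_posneg[OF assms] ls_def by auto
  have inv: "\<And>a b. a \<in> {1..d} \<Longrightarrow> b \<in> {1..d} \<Longrightarrow> a < b \<Longrightarrow> sg a = sg b \<Longrightarrow> bef ls a b"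
    using assms(1) unfolding SQI_def ls_def by blast
  have l0: "loss s l = 0" if "l \<in> {1..d}" for l
  proof -
    have "\<not> flip ls l (same l r')" if "r' < lev l" for r'
    proof -
      have lk: "r' < k" using that lev_lt \<open>l \<in> {1..d}\<close> by force
      have "same l r' \<in> {1..d}" "sg (same l r') = sg l" using pm_props[OF lk] nm_props[OF lk] unfolding same_def by auto
      thus ?thesis unfolding flip_def using inv \<open>l \<in> {1..d}\<close> bef_asym[OF ds] by (meson linorder_neqE_nat)
    qed
    thus ?thesis unfolding loss_def ls_def by auto
  qed
  have gv: "gain s l = (\<Sum>r'<lev l. of_bool (if sg l then nm r' < l else l < pm r'))" if "l \<in> {1..d}" for l
    unfolding gain_def
  proof (intro sum.cong HOL.refl)
    fix r' assume "r' \<in> {..<lev l}"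
    hence lk: "r' < k" using lev_lt \<open>l \<in> {1..d}\<close> by force
    show "of_bool (flip (map snd s) l (opp l r')) = (of_bool (if sg l then nm r' < l else l < pm r') :: int)"
    proof (cases "sg l")
      case True
      have "bef ls l (nm r')" using pn True nm_props[OF lk] that by auto
      hence "\<not> bef ls (nm r') l" using bef_asym[OF ds] by auto
      thus ?thesis using True \<open>bef ls l (nm r')\<close> unfolding flip_def opp_def ls_def by auto
    next
      case False
      have "bef ls (pm r') l" using pn False pm_props[OF lk] that by auto
      hence "\<not> bef ls l (pm r')" using bef_asym[OF ds] by auto
      thus ?thesis using False \<open>bef ls (pm r') l\<close> unfolding flip_def opp_def ls_def by auto
    qed
  qed
  show ?thesis unfolding TLI_def
  proof (intro conjI)
    show "distinct (map snd s)" "set (map snd s) = {1..d}" using ds st ls_def by auto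
    show "\<forall>q\<in>set s. snd (fst q) = sg (snd q) \<and> int (fst (fst q)) = V1 (snd q) - P1 * loss s (snd q)"
    proof
      fix q assume q: "q \<in> set s"
      hence l: "snd q \<in> {1..d}" using st ls_def by auto
      show "snd (fst q) = sg (snd q) \<and> int (fst (fst q)) = V1 (snd q) - P1 * loss s (snd q)"
        using assms(1) q l0[OF l] gv[OF l] unfolding SQI_def V1_def by auto
    qed
    show "\<forall>a b. a \<in> {1..d} \<longrightarrow> b \<in> {1..d} \<longrightarrow> sg a \<longrightarrow> \<not> sg b \<longrightarrow> bef (map snd s) a b"
      using pn ls_def by auto
    show "\<forall>a b. a \<in> {1..d} \<longrightarrow> b \<in> {1..d} \<longrightarrow> sg a = sg b \<longrightarrow> a < b \<longrightarrow> bef (map snd s) b a \<longrightarrow>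
        (if sg a then lev a < lev b else lev b < lev a)"
      using inv bef_asym[OF ds] ls_def by blast
  qed
qed

lemma tl_adj_basic:
  assumes "TLI s" "s = u @ [((a, e), l), ((b, e), m)] @ v"
  shows "l \<in> {1..d} \<and> m \<in> {1..d} \<and> sg l = e \<and> sg m = e \<and> l \<noteq> m \<and> lev l \<noteq> lev m \<and>
     int a = V1 l - P1 * loss s l \<and> int b = V1 m - P1 * loss s m \<and> distinct (map snd u @ [l, m] @ map snd v)
     \<and> bef (map snd s) l m"
proof -
  have ds: "distinct (map snd u @ [l, m] @ map snd v)" using assms unfolding TLI_def by auto
  have lm: "l \<in> {1..d}" "m \<in> {1..d}" using assms unfolding TLI_def by (auto simp: image_iff)
  have q: "sg l = e" "sg m = e" "int a = V1 l - P1 * loss s l" "int b = V1 m - P1 * loss s m"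
    using assms unfolding TLI_def by auto
  have "l \<noteq> m" using ds by auto
  hence "lev l \<noteq> lev m" using same_lev_eq lm q by metis
  thus ?thesis using ds lm q \<open>l \<noteq> m\<close> assms(2) by (auto simp: bef_append)
qed

lemma tl_core:
  assumes "TLI s" "s = u @ [((a, e), l), ((b, e), m)] @ v"
    "s' = u @ [((b', e), m), ((a', e), l)] @ v" "l < m"
    "if e then lev l < lev m else lev m < lev l"
    "int a' = V1 l - P1 * (loss s l + of_bool (lev m < lev l))"
    "int b' = V1 m - P1 * (loss s m + of_bool (lev l < lev m))"
  shows "TLI s'"
proof -
  note bas = tl_adj_basic[OF assms(1,2)]
  define lu where "lu = map snd u"
  define lv where "lv = map snd v"
  have ls: "map snd s = lu @ [l, m] @ lv" and ls': "map snd s' = lu @ [m, l] @ lv"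
    using assms(2,3) lu_def lv_def by auto
  have ds: "distinct (lu @ [l, m] @ lv)" using bas lu_def lv_def by simp
  have fl: "flip (map snd s') x y \<longleftrightarrow> flip (map snd s) x y \<or> (x = l \<and> y = m) \<or> (x = m \<and> y = l)" for x y
    unfolding ls ls' using flip_swap[OF ds] assms(4) by auto
  have nfl: "\<not> flip (map snd s) l m" "\<not> flip (map snd s) m l"
    unfolding ls flip_def using bef_asym[OF ds, of l m] assms(4) by (auto simp: bef_append)
  have g_other: "loss s' z = loss s z" if "z \<noteq> l" "z \<noteq> m" for z
    unfolding loss_def using fl that by auto
  have lk: "lev l < k" "lev m < k" using bas lev_lt by auto
  have seq: "same l r = m \<longleftrightarrow> r = lev m" "same m r = l \<longleftrightarrow> r = lev l" if "r < k" for r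
    using pm_eq_iff[OF that, of m] pm_eq_iff[OF that, of l] nm_eq_iff[OF that, of m] nm_eq_iff[OF that, of l] bas
    unfolding same_def by auto
  have sne: "same l r \<noteq> l" "same m r \<noteq> m" if "r < lev l" "r < lev m" for r
    using pm_props[of r] nm_props[of r] that lk bas unfolding same_def by auto
  have g_l: "loss s' l = loss s l + of_bool (lev m < lev l)"
    unfolding loss_def
  proof (rule sum_bump)
    fix r assume r: "r < lev l"
    have "same l r \<noteq> l" using pm_props[of r] nm_props[of r] r lk bas unfolding same_def by auto
    thus "flip (map snd s') l (same l r) = (flip (map snd s) l (same l r) \<or> r = lev m)"
      using fl seq[of r] r lk by auto
  next
    show "\<not> flip (map snd s) l (same l (lev m))" using nfl seq[of "lev m"] lk by auto
  qed
  have g_m: "loss s' m = loss s m + of_bool (lev l < lev m)"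
    unfolding loss_def
  proof (rule sum_bump)
    fix r assume r: "r < lev m"
    have "same m r \<noteq> m" using pm_props[of r] nm_props[of r] r lk bas unfolding same_def by auto
    thus "flip (map snd s') m (same m r) = (flip (map snd s) m (same m r) \<or> r = lev l)"
      using fl seq[of r] r lk by auto
  next
    show "\<not> flip (map snd s) m (same m (lev l))" using nfl seq[of "lev l"] lk by auto
  qed
  have I1: "distinct (map snd s') \<and> set (map snd s') = {1..d}"
    using assms(1) ls ls' unfolding TLI_def by auto
  have I2: "\<forall>q\<in>set s'. snd (fst q) = sg (snd q) \<and> int (fst (fst q)) = V1 (snd q) - P1 * loss s' (snd q)"
  proof
    fix q assume q: "q \<in> set s'"
    show "snd (fst q) = sg (snd q) \<and> int (fst (fst q)) = V1 (snd q) - P1 * loss s' (snd q)"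
    proof (cases "q \<in> set u \<union> set v")
      case True
      hence "q \<in> set s" using assms(2) by auto
      moreover have "snd q \<noteq> l" "snd q \<noteq> m" using True ds lu_def lv_def by (auto simp: image_iff)
      ultimately show ?thesis using assms(1) g_other unfolding TLI_def by auto
    next
      case False
      hence "q = ((b', e), m) \<or> q = ((a', e), l)" using q assms(3) by auto
      thus ?thesis using bas g_l g_m assms(6,7) by auto
    qed
  qed
  have I3: "\<forall>x y. x \<in> {1..d} \<longrightarrow> y \<in> {1..d} \<longrightarrow> sg x \<longrightarrow> \<not> sg y \<longrightarrow> bef (map snd s') x y"
  proof (intro allI impI)
    fix x y assume h: "x \<in> {1..d}" "y \<in> {1..d}" "sg x" "\<not> sg y"
    hence "bef (map snd s) x y" using assms(1) unfolding TLI_def by blast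
    moreover have "\<not> (x = l \<and> y = m)" using h bas by auto
    ultimately show "bef (map snd s') x y" unfolding ls ls' using bef_swap[OF ds] by auto
  qed
  have I4: "\<forall>x y. x \<in> {1..d} \<longrightarrow> y \<in> {1..d} \<longrightarrow> sg x = sg y \<longrightarrow> x < y \<longrightarrow> bef (map snd s') y x \<longrightarrow>
        (if sg x then lev x < lev y else lev y < lev x)"
  proof (intro allI impI)
    fix x y assume h: "x \<in> {1..d}" "y \<in> {1..d}" "sg x = sg y" "x < y" "bef (map snd s') y x"
    hence "(y = m \<and> x = l) \<or> (bef (map snd s) y x \<and> \<not> (y = l \<and> x = m))"
      unfolding ls ls' using bef_swap[OF ds] by auto
    thus "if sg x then lev x < lev y else lev y < lev x"
    proof
      assume "y = m \<and> x = l" thus ?thesis using assms(5) bas by auto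
    next
      assume "bef (map snd s) y x \<and> \<not> (y = l \<and> x = m)"
      thus ?thesis using assms(1) h unfolding TLI_def by blast
    qed
  qed
  show ?thesis unfolding TLI_def using I1 I2 I3 I4 by blast
qed

lemma tl_pres: "tl_step p s s' \<Longrightarrow> TLI s \<Longrightarrow> TLI s'"
proof (induction rule: tl_step.induct)
  case (pos a b u l m v)
  note bas = tl_adj_basic[OF pos.prems HOL.refl]
  have ia: "inb l (int a)" and ib: "inb m (int b)" using bas inb_tl by auto
  have lv: "lev l < lev m"
  proof (rule ccontr)
    assume "\<not> lev l < lev m"
    hence "lev m < lev l" using bas by auto
    from sep[OF _ _ this ia ib] bas pos.hyps p2 show False unfolding P1_def by auto
  qed
  have "l < m"
  proof (rule ccontr)
    assume "\<not> l < m"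
    hence "m < l" using bas by auto
    hence "lev m < lev l" using pos.prems bas unfolding TLI_def by auto
    thus False using lv by auto
  qed
  show ?case by (rule tl_core[OF pos.prems HOL.refl HOL.refl \<open>l < m\<close>])
    (use bas lv p2 pos.hyps in \<open>auto simp: P1_def algebra_simps of_nat_diff\<close>)
next
  case (neg b a u l m v)
  note bas = tl_adj_basic[OF neg.prems HOL.refl]
  have ia: "inb l (int a)" and ib: "inb m (int b)" using bas inb_tl by auto
  have lv: "lev m < lev l"
  proof (rule ccontr)
    assume "\<not> lev m < lev l"
    hence "lev l < lev m" using bas by auto
    from sep[OF _ _ this ib ia] bas neg.hyps p2 show False unfolding P1_def by auto
  qed
  have "l < m"
  proof (rule ccontr)
    assume "\<not> l < m"
    hence "m < l" using bas by auto
    hence "lev l < lev m" using neg.prems bas unfolding TLI_def by auto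
    thus False using lv by auto
  qed
  show ?case by (rule tl_core[OF neg.prems HOL.refl HOL.refl \<open>l < m\<close>])
    (use bas lv p2 neg.hyps in \<open>auto simp: P1_def algebra_simps of_nat_diff\<close>)
qed

lemma tl_pres_rtc: "(tl_step p)\<^sup>*\<^sup>* s s' \<Longrightarrow> TLI s \<Longrightarrow> TLI s'"
  by (induction rule: rtranclp_induct) (auto intro: tl_pres)

end



context constr begin

definition "LL = map it [1..<Suc d]"

lemma it_inj: "inj_on it {1..d}"
  by (metis inj_onI t_it)

lemma LL_props: "distinct LL" "set LL = {1..d}" "length LL = d"
proof -
  show "distinct LL" unfolding LL_def distinct_map using it_inj
    by (simp del: upt_Suc add: atLeastLessThanSuc_atLeastAtMost)
  have "it ` {1..d} = {1..d}"
  proof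
    show "it ` {1..d} \<subseteq> {1..d}" using it_range by auto
    show "{1..d} \<subseteq> it ` {1..d}"
    proof
      fix x assume "x \<in> {1..d}"
      hence "t x \<in> {1..d}" "it (t x) = x" using t_range by auto
      thus "x \<in> it ` {1..d}" by (metis image_eqI)
    qed
  qed
  thus "set LL = {1..d}" unfolding LL_def by (simp del: upt_Suc add: atLeastLessThanSuc_atLeastAtMost)
  show "length LL = d" unfolding LL_def by simp
qed

lemma LL_nth: "j < d \<Longrightarrow> LL ! j = it (Suc j)"
  unfolding LL_def by (simp del: upt_Suc)

lemma bef_LL: "bef LL a b \<longleftrightarrow> a \<in> {1..d} \<and> b \<in> {1..d} \<and> t a < t b"
proof
  assume "bef LL a b"
  then obtain i j where ij: "i < j" "j < length LL" "LL ! i = a" "LL ! j = b" using bef_nth_iff by blast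
  hence "a = it (Suc i)" "b = it (Suc j)" using LL_nth LL_props by auto
  moreover have "Suc i \<in> {1..d}" "Suc j \<in> {1..d}" using ij LL_props by auto
  ultimately show "a \<in> {1..d} \<and> b \<in> {1..d} \<and> t a < t b" using ij it_range by auto
next
  assume h: "a \<in> {1..d} \<and> b \<in> {1..d} \<and> t a < t b"
  hence ta: "t a \<in> {1..d}" "t b \<in> {1..d}" using t_range by auto
  have "LL ! (t a - 1) = a" "LL ! (t b - 1) = b" using LL_nth ta by auto
  thus "bef LL a b" unfolding bef_nth_iff using h ta LL_props
    by (intro exI[of _ "t a - 1"] exI[of _ "t b - 1"]) auto
qed

lemma tl_final_lev:
  assumes "TLI u" "\<not> (\<exists>u'. tl_step p u u')" "a \<in> {1..d}" "b \<in> {1..d}"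
  shows "(sg a \<and> sg b \<and> lev b < lev a \<longrightarrow> bef (map snd u) a b) \<and>
         (\<not> sg a \<and> \<not> sg b \<and> lev a < lev b \<longrightarrow> bef (map snd u) a b)"
proof -
  define ls where "ls = map snd u"
  have ds: "distinct ls" and st: "set ls = {1..d}" using assms(1) unfolding TLI_def ls_def by auto
  have sgq: "\<And>q. q \<in> set u \<Longrightarrow> snd (fst q) = sg (snd q)" using assms(1) unfolding TLI_def by auto
  have valq: "\<And>q. q \<in> set u \<Longrightarrow> inb (snd q) (int (fst (fst q)))"
  proof -
    fix q assume q: "q \<in> set u"
    hence "snd q \<in> {1..d}" using st ls_def by auto
    thus "inb (snd q) (int (fst (fst q)))" using assms(1) q inb_tl unfolding TLI_def by auto
  qed
  have pn: "\<And>x y. x \<in> {1..d} \<Longrightarrow> y \<in> {1..d} \<Longrightarrow> sg x \<Longrightarrow> \<not> sg y \<Longrightarrow> bef ls x y"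
    using assms(1) unfolding TLI_def ls_def by blast
  define PP where "PP = filter (\<lambda>q. snd (fst q)) u"
  define NN where "NN = filter (\<lambda>q. \<not> snd (fst q)) u"
  have split: "u = PP @ NN" unfolding PP_def NN_def
  proof (rule filter_split, intro allI impI)
    fix i j assume ij: "i < j" "j < length u" "snd (fst (u ! j))"
    show "snd (fst (u ! i))"
    proof (rule ccontr)
      assume ni: "\<not> snd (fst (u ! i))"
      have mem: "u ! i \<in> set u" "u ! j \<in> set u" using ij by auto
      hence rng: "snd (u ! i) \<in> {1..d}" "snd (u ! j) \<in> {1..d}" using st ls_def by auto
      have "bef ls (snd (u ! j)) (snd (u ! i))" using pn rng sgq[OF mem(1)] sgq[OF mem(2)] ni ij(3) by auto
      moreover have "bef ls (snd (u ! i)) (snd (u ! j))" using bef_nth[of i j ls] ij ls_def by auto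
      ultimately show False using bef_asym[OF ds] by auto
    qed
  qed
  have lsplit: "ls = map snd PP @ map snd NN" using split ls_def by (metis map_append)
  have PPs: "\<And>q. q \<in> set PP \<Longrightarrow> sg (snd q) \<and> q \<in> set u" using sgq unfolding PP_def by auto
  have NNs: "\<And>q. q \<in> set NN \<Longrightarrow> \<not> sg (snd q) \<and> q \<in> set u" using sgq unfolding NN_def by auto
  show ?thesis
  proof (intro conjI impI)
    assume h: "sg a \<and> sg b \<and> lev b < lev a"
    show "bef (map snd u) a b"
    proof (rule ccontr)
      assume "\<not> bef (map snd u) a b"
      moreover have "a \<noteq> b" using h by auto
      ultimately have "bef ls b a" using bef_total[of a ls b] st assms(3,4) ls_def by auto
      moreover have "a \<notin> set (map snd NN)" using NNs h by auto
      ultimately have "bef (map snd PP) b a" unfolding lsplit bef_append by (auto dest: bef_in)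
      moreover have "\<forall>q\<in>set PP. snd q = b \<longrightarrow> \<not> lev a \<le> lev (snd q)" using h by auto
      moreover have "\<forall>q\<in>set PP. snd q = a \<longrightarrow> lev a \<le> lev (snd q)" by auto
      ultimately obtain u1 x y v1 where dec: "PP = u1 @ [x, y] @ v1" "\<not> lev a \<le> lev (snd x)" "lev a \<le> lev (snd y)"
        using bef_ascent[of snd PP b a "\<lambda>q. lev a \<le> lev (snd q)"] by blast
      have xy: "x \<in> set PP" "y \<in> set PP" using dec by auto
      hence xs: "x \<in> set u" "y \<in> set u" "snd (fst x)" "snd (fst y)" using PPs sgq by auto
      have rx: "snd x \<in> {1..d}" "snd y \<in> {1..d}" using xs st ls_def by auto
      have "int (fst (fst x)) + P1 < int (fst (fst y))"
        using sep[OF rx(2) rx(1) _ valq[OF xs(2)] valq[OF xs(1)]] dec by auto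
      hence lt: "fst (fst x) + p - 1 < fst (fst y)" using p2 unfolding P1_def by auto
      obtain ia lx where x: "x = ((ia, True), lx)" using xs(3) by (cases x) auto
      obtain ib ly where y: "y = ((ib, True), ly)" using xs(4) by (cases y) auto
      have "tl_step p u (u1 @ [((ib + 1 - p, True), ly), ((ia, True), lx)] @ (v1 @ NN))"
        using tl_step.pos[of ia p ib u1 lx ly "v1 @ NN"] lt split dec x y by auto
      thus False using assms(2) by blast
    qed
  next
    assume h: "\<not> sg a \<and> \<not> sg b \<and> lev a < lev b"
    show "bef (map snd u) a b"
    proof (rule ccontr)
      assume "\<not> bef (map snd u) a b"
      moreover have "a \<noteq> b" using h by auto
      ultimately have "bef ls b a" using bef_total[of a ls b] st assms(3,4) ls_def by auto
      moreover have "b \<notin> set (map snd PP)" "a \<notin> set (map snd PP)" using PPs h by auto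
      ultimately have "bef (map snd NN) b a" unfolding lsplit bef_append by (auto dest: bef_in)
      moreover have "\<forall>q\<in>set NN. snd q = b \<longrightarrow> \<not> lev (snd q) \<le> lev a" using h by auto
      moreover have "\<forall>q\<in>set NN. snd q = a \<longrightarrow> lev (snd q) \<le> lev a" by auto
      ultimately obtain u1 x y v1 where dec: "NN = u1 @ [x, y] @ v1" "\<not> lev (snd x) \<le> lev a" "lev (snd y) \<le> lev a"
        using bef_ascent[of snd NN b a "\<lambda>q. lev (snd q) \<le> lev a"] by blast
      have xy: "x \<in> set NN" "y \<in> set NN" using dec by auto
      hence xs: "x \<in> set u" "y \<in> set u" "\<not> snd (fst x)" "\<not> snd (fst y)" using NNs sgq by auto
      have rx: "snd x \<in> {1..d}" "snd y \<in> {1..d}" using xs st ls_def by auto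
      have "int (fst (fst y)) + P1 < int (fst (fst x))"
        using sep[OF rx(1) rx(2) _ valq[OF xs(1)] valq[OF xs(2)]] dec by auto
      hence lt: "fst (fst y) + p - 1 < fst (fst x)" using p2 unfolding P1_def by auto
      obtain ia lx where x: "x = ((ia, False), lx)" using xs(3) by (cases x) auto
      obtain ib ly where y: "y = ((ib, False), ly)" using xs(4) by (cases y) auto
      have "tl_step p u ((PP @ u1) @ [((ib, False), ly), ((ia + 1 - p, False), lx)] @ v1)"
        using tl_step.neg[of ib p ia "PP @ u1" lx ly v1] lt split dec x y by auto
      thus False using assms(2) by blast
    qed
  qed
qed

lemma tl_final_order:
  assumes "TLI u" "\<not> (\<exists>u'. tl_step p u u')"
  shows "map snd u = LL"
proof (rule bef_eq_list)
  have ds: "distinct (map snd u)" and st: "set (map snd u) = {1..d}" using assms(1) unfolding TLI_def by auto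
  show "distinct (map snd u)" "distinct LL" "set (map snd u) = set LL" using ds st LL_props by auto
  show "\<forall>a b. bef (map snd u) a b \<longleftrightarrow> bef LL a b"
  proof (intro allI)
    fix a b
    have fwd: "bef (map snd u) a b" if h: "a \<in> {1..d}" "b \<in> {1..d}" "t a < t b" for a b
    proof -
      have ta: "t a \<in> {1..d}" "t b \<in> {1..d}" using t_range h by auto
      consider "sg a \<and> sg b" | "\<not> sg a \<and> \<not> sg b" | "sg a \<and> \<not> sg b" | "\<not> sg a \<and> sg b" by blast
      thus ?thesis
      proof cases
        case 1
        hence "lev b < lev a" using h ta unfolding sg_def lev_def by auto
        thus ?thesis using tl_final_lev[OF assms h(1,2)] 1 by auto
      next
        case 2
        hence "lev a < lev b" using h ta unfolding sg_def lev_def by auto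
        thus ?thesis using tl_final_lev[OF assms h(1,2)] 2 by auto
      next
        case 3 thus ?thesis using assms(1) h unfolding TLI_def by blast
      next
        case 4 thus ?thesis using h unfolding sg_def by auto
      qed
    qed
    show "bef (map snd u) a b \<longleftrightarrow> bef LL a b"
    proof
      assume b: "bef (map snd u) a b"
      hence r: "a \<in> {1..d}" "b \<in> {1..d}" using bef_in[OF b] st by auto
      have "a \<noteq> b" using b bef_irrefl[OF ds] by auto
      hence "t a \<noteq> t b" by (metis it_t)
      moreover have "\<not> t b < t a" using fwd[of b a] r b bef_asym[OF ds] by auto
      ultimately show "bef LL a b" using bef_LL r by auto
    next
      assume "bef LL a b" thus "bef (map snd u) a b" using bef_LL fwd by auto
    qed
  qed
qed

lemma pos_fun_u:
  assumes "map snd u = LL"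
  shows "pos_fun u = t"
proof
  fix l
  have len: "length u = d" using assms LL_props by (metis length_map)
  have sn: "j < d \<Longrightarrow> snd (u ! j) = it (Suc j)" for j using assms LL_nth len by (metis nth_map)
  show "pos_fun u l = t l"
  proof (cases "l \<in> {1..d}")
    case True
    hence tl: "t l \<in> {1..d}" using t_range by auto
    have ex: "t l - 1 < length u \<and> snd (u ! (t l - 1)) = l" using sn tl len by auto
    have "(THE j. j < length u \<and> snd (u ! j) = l) = t l - 1"
    proof (rule the_equality)
      show "t l - 1 < length u \<and> snd (u ! (t l - 1)) = l" by (rule ex)
      fix j assume "j < length u \<and> snd (u ! j) = l"
      hence "it (Suc j) = l" "j < d" using sn len by auto
      hence "Suc j = t l" by (metis t_it)
      thus "j = t l - 1" by auto
    qed
    thus ?thesis unfolding pos_fun_def using ex tl by auto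
  next
    case False
    have "\<not> (\<exists>j<length u. snd (u ! j) = l)"
    proof
      assume "\<exists>j<length u. snd (u ! j) = l"
      then obtain j where "j < d" "it (Suc j) = l" using sn len by auto
      thus False using it_range[of "Suc j"] False by auto
    qed
    thus ?thesis unfolding pos_fun_def using False permutes_not_in[OF perm] by auto
  qed
qed

lemma tl_final_vals:
  assumes "TLI u" "\<not> (\<exists>u'. tl_step p u u')"
  shows "map fst u = map (\<lambda>i. (i, True)) (rev (map (\<lambda>r. nat (F r)) [0..<k])) @ map (\<lambda>i. (i, False)) (map (\<lambda>r. nat (F r)) [0..<k])"
proof -
  have ord: "map snd u = LL" by (rule tl_final_order[OF assms])
  have ds: "distinct (map snd u)" and st: "set (map snd u) = {1..d}" using assms(1) unfolding TLI_def by auto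
  have befu: "bef (map snd u) a b \<longleftrightarrow> a \<in> {1..d} \<and> b \<in> {1..d} \<and> t a < t b" for a b using ord bef_LL by simp
  have val: "fst q = (nat (F (lev (snd q))), sg (snd q))" if q: "q \<in> set u" for q
  proof -
    define l where "l = snd q"
    have l: "l \<in> {1..d}" using q st l_def by auto
    define r where "r = lev l"
    have rk: "r < k" using lev_lt l r_def by auto
    have qv: "snd (fst q) = sg l" "int (fst (fst q)) = V1 l - P1 * loss u l" using assms(1) q l_def unfolding TLI_def by auto
    have "V1 l - P1 * loss u l = F r"
    proof (cases "sg l")
      case True
      have lp: "l = pm r" using pm_lev l True r_def by auto
      have "loss u l = (\<Sum>r'<r. of_bool (pm r' < pm r))"
        unfolding loss_def r_def[symmetric]
      proof (intro sum.cong HOL.refl)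
        fix r' assume "r' \<in> {..<r}"
        hence r': "r' < r" by auto
        have x: "pm r' \<in> {1..d}" "t (pm r') = k - r'" using pm_props[of r'] r' rk by auto
        have "t l = k - r" using pm_props[OF rk] lp by auto
        hence "bef (map snd u) l (pm r')" using befu x l r' rk by auto
        hence "\<not> bef (map snd u) (pm r') l" using bef_asym[OF ds] by auto
        thus "of_bool (flip (map snd u) l (same l r')) = (of_bool (pm r' < pm r) :: int)"
          using \<open>bef (map snd u) l (pm r')\<close> True lp unfolding flip_def same_def by auto
      qed
      moreover have "V1 l = L r + P1 * (\<Sum>r'<r. of_bool (nm r' < pm r))"
      proof -
        have "V1 l = L (lev l) + P1 * (\<Sum>r'<lev l. of_bool (nm r' < l))" unfolding V1_def V_def using True by simp
        thus ?thesis unfolding r_def[symmetric] using lp by simp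
      qed
      ultimately show ?thesis unfolding F_def A_def by (simp add: sum_subtractf algebra_simps)
    next
      case False
      have ln: "l = nm r" using nm_lev l False r_def by auto
      have "loss u l = (\<Sum>r'<r. of_bool (nm r < nm r'))"
        unfolding loss_def r_def[symmetric]
      proof (intro sum.cong HOL.refl)
        fix r' assume "r' \<in> {..<r}"
        hence r': "r' < r" by auto
        have x: "nm r' \<in> {1..d}" "t (nm r') = Suc (k + r')" using nm_props[of r'] r' rk by auto
        have "t l = Suc (k + r)" using nm_props[OF rk] ln by auto
        hence "bef (map snd u) (nm r') l" using befu x l r' rk by auto
        hence "\<not> bef (map snd u) l (nm r')" using bef_asym[OF ds] by auto
        thus "of_bool (flip (map snd u) l (same l r')) = (of_bool (nm r < nm r') :: int)"
          using \<open>bef (map snd u) (nm r') l\<close> False ln unfolding flip_def same_def by auto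
      qed
      moreover have "V1 l = L r + P1 * (A r - B r) + P1 * (\<Sum>r'<r. of_bool (nm r < pm r'))"
      proof -
        have "V1 l = L (lev l) + P1 * (A (lev l) - B (lev l)) + P1 * (\<Sum>r'<lev l. of_bool (l < pm r'))" unfolding V1_def V_def using False by simp
        thus ?thesis unfolding r_def[symmetric] using ln by simp
      qed
      ultimately show ?thesis unfolding F_def B_def by (simp add: sum_subtractf algebra_simps)
    qed
    hence "int (fst (fst q)) = F r" using qv by simp
    hence "fst (fst q) = nat (F r)" by simp
    thus ?thesis using qv r_def l_def by (simp add: prod_eq_iff)
  qed
  have "map fst u = map (\<lambda>l. (nat (F (lev l)), sg l)) (map snd u)"
    using val by (simp add: map_eq_conv)
  also have "map snd u = map pm (rev [0..<k]) @ map nm [0..<k]"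
    unfolding ord
  proof (rule nth_equalityI)
    show "length LL = length (map pm (rev [0..<k]) @ map nm [0..<k])" using LL_props d2k by simp
    fix j assume "j < length LL"
    hence j: "j < d" using LL_props by auto
    show "LL ! j = (map pm (rev [0..<k]) @ map nm [0..<k]) ! j"
    proof (cases "j < k")
      case True
      have "(map pm (rev [0..<k]) @ map nm [0..<k]) ! j = pm (k - Suc j)"
        using True by (simp add: nth_append rev_nth)
      also have "\<dots> = it (Suc j)" unfolding pm_def using True by (simp add: Suc_diff_Suc)
      finally show ?thesis using LL_nth j by simp
    next
      case False
      have "(map pm (rev [0..<k]) @ map nm [0..<k]) ! j = nm (j - k)"
        using False j d2k by (simp add: nth_append)
      also have "\<dots> = it (Suc j)" unfolding nm_def using False by simp
      finally show ?thesis using LL_nth j by simp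
    qed
  qed
  finally show ?thesis using pm_props nm_props by (simp add: rev_map[symmetric] o_def)
qed

end



context constr begin

lemma word_nth: "r < k \<Longrightarrow> word ! (inv t (d div 2 - r) - 1) =
   (nat (int (c r) + 3 * ((int p - 1) * int (d div 2)) + int r * (6 * ((int p - 1) * int (d div 2)))), True)"
proof -
  assume rk: "r < k"
  have pr: "pm r \<in> {1..d}" "sg (pm r)" "lev (pm r) = r" using pm_props[OF rk] by auto
  have i: "pm r - 1 < length [1..<Suc d]" using pr by auto
  have "word ! (pm r - 1) = (nat (V ([1..<Suc d] ! (pm r - 1))), sg ([1..<Suc d] ! (pm r - 1)))"
    unfolding word_def using nth_map[OF i] by (simp del: upt_Suc)
  moreover have "[1..<Suc d] ! (pm r - 1) = pm r" using pr nth_upt[of 1 "pm r - 1" "Suc d"] by auto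
  ultimately have "word ! (pm r - 1) = (nat (V (pm r)), sg (pm r))" by simp
  moreover have "V (pm r) = L r" using pr unfolding V_def by simp
  ultimately show ?thesis using pr unfolding pm_def it_def k_def L_def base_def G_def P1_def
    by (simp add: algebra_simps)
qed

lemma word_W0tau:
  assumes bd: "\<And>r. r < k \<Longrightarrow> L r + 2 * (P1 * int r) < int n"
  shows "word \<in> W0_tau p d n t"
proof -
  obtain v where v: "(sq_step p)\<^sup>*\<^sup>* (label word) v" "\<not> (\<exists>v'. sq_step p v v')"
    using nf_exists[of "sq_step p" negmeas] sq_dec by blast
  obtain u where u: "(tl_step p)\<^sup>*\<^sup>* v u" "\<not> (\<exists>u'. tl_step p u u')"
    using nf_exists[of "tl_step p" "\<lambda>s. sum_list (map (fst o fst) s)"] tl_dec p2 by blast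
  have NFu: "NF_rel p (label word) u" unfolding NF_rel_def using u v by blast
  have allu: "pos_fun u' = t \<and> TLI u'" if nf: "NF_rel p (label word) u'" for u'
  proof -
    obtain v' where v': "(sq_step p)\<^sup>*\<^sup>* (label word) v'" "\<not> (\<exists>v''. sq_step p v' v'')"
      "(tl_step p)\<^sup>*\<^sup>* v' u'" "\<not> (\<exists>u''. tl_step p u' u'')"
      using nf unfolding NF_rel_def by blast
    have "SQI v'" using sq_pres_rtc[OF v'(1) sq_init] .
    have "TLI v'" by (rule tl_init[OF \<open>SQI v'\<close> v'(2)])
    have T: "TLI u'" by (rule tl_pres_rtc[OF v'(3) \<open>TLI v'\<close>])
    have "pos_fun u' = t" by (rule pos_fun_u[OF tl_final_order[OF T v'(4)]])
    thus ?thesis using T by blast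
  qed
  have tau: "tau p word = t"
    unfolding tau_def
  proof (rule the_equality)
    show "\<exists>u. NF_rel p (label word) u \<and> t = pos_fun u" using NFu allu by auto
    fix t' assume "\<exists>u. NF_rel p (label word) u \<and> t' = pos_fun u"
    thus "t' = t" using allu by auto
  qed
  have lw: "length word = d" unfolding word_def by simp
  have mf: "map fst (label word) = word" unfolding label_def using lw by simp
  have e1: "Fp_eq p (map fst (label word)) (map fst v)" using rtc_sound[OF v(1)] sq_sound by blast
  have e2: "Fp_eq p (map fst v) (map fst u)" using rtc_sound[OF u(1)] tl_sound p2 by blast
  have e3: "Fp_eq p (map fst u) []" unfolding tl_final_vals[OF conjunct2[OF allu[OF NFu]] u(2)] by (rule cancel_all)
  have triv: "eval_trivial p word" unfolding eval_trivial_def using Fp_eq.trans[OF Fp_eq.trans[OF e1 e2] e3] mf by simp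
  have rng: "\<forall>x\<in>set word. fst x < n"
  proof
    fix x assume "x \<in> set word"
    then obtain l where l: "l \<in> {1..d}" "x = (nat (V l), sg l)" unfolding word_def by (force simp del: upt_Suc)
    have "lev l < k" using lev_lt l by auto
    hence "L (lev l) + 2 * (P1 * int (lev l)) < int n" using bd by auto
    hence vn: "V l < int n" using V_bd[OF l(1)] by auto
    have "0 \<le> L (lev l)" unfolding L_def base_def G_def using P1pos by auto
    moreover have "0 \<le> P1 * int (lev l)" using P1pos by auto
    ultimately have "0 < int n" using \<open>L (lev l) + 2 * (P1 * int (lev l)) < int n\<close> by linarith
    hence "nat (V l) < n" using vn by (cases "V l \<ge> 0") (auto simp: nat_less_iff)
    thus "fst x < n" using l by auto
  qed
  show ?thesis unfolding W0_tau_def W0_def using lw rng triv tau by auto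
qed

end



theorem mainTheorem9:
  fixes p d n :: nat and t :: "nat \<Rightarrow> nat"
  assumes "p \<ge> 2" and "even d" and "t permutes {1..d}"
    and "n > d * (p - 1) + d * (4 * p - 4) + (d ^ 2 div 2) * (4 * p - 4) + d div 2"
  shows "(n - d * (p - 1) - d * (4 * p - 4) - (d ^ 2 div 2) * (4 * p - 4)) choose (d div 2)
           \<le> N p d n t"
proof -
  define k where "k = d div 2"
  define T where "T = d * (p - 1) + d * (4 * p - 4) + (d ^ 2 div 2) * (4 * p - 4)"
  define M where "M = n - T"
  have d2k: "d = 2 * k" using assms(2) k_def by auto
  have sq: "d ^ 2 div 2 = 2 * (k * k)" using d2k by (simp add: power2_eq_square)
  have p4: "4 * p - 4 = 4 * (p - 1)" by (simp add: diff_mult_distrib2)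
  obtain q where pq: "p = Suc q" using assms(1) by (cases p) auto
  have Teq: "T = (p - 1) * (10 * k + 8 * (k * k))"
  proof -
    have "T = 2 * k * q + 2 * k * (4 * q) + 2 * (k * k) * (4 * q)" unfolding T_def sq p4 pq d2k by (simp add: power2_eq_square)
    thus ?thesis using pq by (simp add: algebra_simps)
  qed
  have Tk: "T + k < n" using assms(4) unfolding T_def k_def by simp
  have nMT: "n = M + T" and kM: "k < M" using Tk unfolding M_def by auto
  have goal_eq: "n - d * (p - 1) - d * (4 * p - 4) - (d ^ 2 div 2) * (4 * p - 4) = M"
    unfolding M_def T_def by simp
  define P1 :: int where "P1 = int p - 1"
  have P1p: "P1 \<ge> 1" using assms(1) P1_def by auto
  have intT: "int T = 10 * (P1 * int k) + 8 * (P1 * (int k * int k))"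
    unfolding Teq P1_def pq by (simp add: algebra_simps)
  define SS where "SS = {S. S \<subseteq> {0..<M} \<and> card S = k}"
  have cardSS: "card SS = M choose k" using n_subsets[of "{0..<M}" k] by (simp add: SS_def)
  define phi where "phi S = constr.word p d t (\<lambda>r. sorted_list_of_set S ! r)" for S
  have basic: "finite S \<and> length (sorted_list_of_set S) = k \<and> sorted_wrt (<) (sorted_list_of_set S)
      \<and> set (sorted_list_of_set S) \<subseteq> {0..<M}" if "S \<in> SS" for S
  proof -
    have "finite S" using that unfolding SS_def by (auto intro: finite_subset)
    thus ?thesis using that unfolding SS_def by (auto simp: strict_sorted_list_of_set)
  qed
  have cmono: "(\<lambda>r. sorted_list_of_set S ! r) r' < (\<lambda>r. sorted_list_of_set S ! r) r"
    if "S \<in> SS" "r' < r" "r < d div 2" for S r r'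
    using sorted_wrt_nth_less[of "(<)" "sorted_list_of_set S" r' r] basic[OF that(1)] that k_def by auto
  have cM: "sorted_list_of_set S ! r < M" if "S \<in> SS" "r < k" for S r
    using basic[OF that(1)] that(2) nth_mem[of r "sorted_list_of_set S"] by auto
  have mem: "phi S \<in> W0_tau p d n t" if S: "S \<in> SS" for S
  proof -
    define c where "c = (\<lambda>r. sorted_list_of_set S ! r)"
    interpret C: constr p d t c
      using assms(1,2,3) cmono[OF S] unfolding c_def by unfold_locales auto
    have bd: "C.L r + 2 * (C.P1 * int r) < int n" if r: "r < C.k" for r
    proof -
      have rk: "r < k" using r unfolding C.k_def k_def .
      have c1: "int (c r) + 1 \<le> int M" using cM[OF S rk] unfolding c_def by auto
      have X0: "0 \<le> P1 * int k" "0 \<le> P1 * (int k * int k)" using P1p by auto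
      have "int r * (6 * (P1 * int k)) \<le> (int k - 1) * (6 * (P1 * int k))"
        using rk X0 by (intro mult_right_mono) auto
      moreover have "(int k - 1) * (6 * (P1 * int k)) = 6 * (P1 * (int k * int k)) - 6 * (P1 * int k)"
        by (simp add: algebra_simps)
      moreover have "P1 * int r \<le> P1 * int k" using rk P1p by (intro mult_left_mono) auto
      ultimately show ?thesis unfolding C.L_def C.base_def C.G_def C.P1_def C.k_def k_def[symmetric] P1_def[symmetric]
        using nMT intT c1 X0 by simp
    qed
    show ?thesis using C.word_W0tau[OF bd] unfolding phi_def c_def by simp
  qed
  have inj: "inj_on phi SS"
  proof
    fix S S' assume S: "S \<in> SS" and S': "S' \<in> SS" and eq: "phi S = phi S'"
    define c where "c = (\<lambda>r. sorted_list_of_set S ! r)"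
    define c' where "c' = (\<lambda>r. sorted_list_of_set S' ! r)"
    interpret C: constr p d t c
      using assms(1,2,3) cmono[OF S] unfolding c_def by unfold_locales auto
    interpret C': constr p d t c'
      using assms(1,2,3) cmono[OF S'] unfolding c'_def by unfold_locales auto
    have "c r = c' r" if r: "r < k" for r
    proof -
      have "C.word = C'.word" using eq unfolding phi_def c_def c'_def by simp
      hence e: "C.word ! (inv t (d div 2 - r) - 1) = C'.word ! (inv t (d div 2 - r) - 1)" by simp
      have r': "r < C.k" "r < C'.k" using r unfolding C.k_def C'.k_def k_def by auto
      have X: "0 \<le> 3 * ((int p - 1) * int (d div 2)) + int r * (6 * ((int p - 1) * int (d div 2)))"
        using assms(1) by auto
      show ?thesis using e C.word_nth[OF r'(1)] C'.word_nth[OF r'(2)] X by auto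
    qed
    hence "sorted_list_of_set S = sorted_list_of_set S'"
      using basic[OF S] basic[OF S'] unfolding c_def c'_def by (intro nth_equalityI) auto
    thus "S = S'" using basic[OF S] basic[OF S'] by (metis sorted_list_of_set.set_sorted_key_list_of_set)
  qed
  have fin: "finite (W0_tau p d n t)"
  proof (rule finite_subset)
    show "W0_tau p d n t \<subseteq> {xs. set xs \<subseteq> {0..<n} \<times> UNIV \<and> length xs = d}"
      unfolding W0_tau_def W0_def by auto
    show "finite {xs. set xs \<subseteq> {0..<n} \<times> (UNIV :: bool set) \<and> length xs = d}"
      by (rule finite_lists_length_eq) auto
  qed
  have "card SS = card (phi ` SS)" using card_image[OF inj] by simp
  also have "\<dots> \<le> card (W0_tau p d n t)" using mem fin by (intro card_mono) auto
  finally show ?thesis unfolding goal_eq N_def cardSS k_def .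
qed


end
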